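(* For all even integers $n\geq 4$ and every $\lambda>-\frac12$, the best Markov constant satisfies $$\frac{(n+2)(n+2\lambda)\big(n+\lambda+\frac12\big)^2}{(2\lambda+1)(2\lambda+5)}\leq c_n^2(\lambda)\leq\frac{n(n+2\lambda)(n+2\lambda+2)\sqrt{(n+2)(n+2\lambda+3)}}{2(2\lambda+1)\sqrt{2\lambda+5}}.$$
   Context: $\mathcal{P}_n$ denotes the class of real algebraic polynomials of degree at most $n$. For $\lambda>-1/2$, $w_\lambda(t)=(1-t^2)^{\lambda-1/2}$ on $(-1,1)$ and $\Vert f\Vert_{w_\lambda}=\big(\int_{-1}^1 w_\lambda(t)f^2(t)\,dt\big)^{1/2}$. The best Markov constant is $c_n(\lambda)=\sup\{\Vert p'\Vert_{w_\lambda}/\Vert p\Vert_{w_\lambda}: p\in\mathcal{P}_n,\ p\neq 0\}$. *)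

theory Defs
  imports "HOL-Analysis.Analysis" "HOL-Computational_Algebra.Polynomial"
begin

definition gegen_weight :: "real \<Rightarrow> real \<Rightarrow> real" where
  "gegen_weight lam t = (1 - t\<^sup>2) powr (lam - 1/2)"

definition wnorm :: "real \<Rightarrow> (real \<Rightarrow> real) \<Rightarrow> real" where
  "wnorm lam f = sqrt (LINT t:{-1<..<1}|lborel. gegen_weight lam t * (f t)\<^sup>2)"

definition markov_const :: "nat \<Rightarrow> real \<Rightarrow> real" where
  "markov_const n lam = Sup {wnorm lam (poly (pderiv p)) / wnorm lam (poly p) | p :: real poly.
       degree p \<le> n \<and> p \<noteq> 0}"

end

theory Submission
  imports Defs
begin

lemma powr_integrable_left:
  fixes a :: real assumes a: "a > -1"
  shows "(\<lambda>t. (1 - t) powr a) absolutely_integrable_on {-1..1}"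
proof -
  have "((\<lambda>t. (1 - t) powr a) has_integral ((\<lambda>t. - ((1 - t) powr (a+1) / (a+1))) 1 - (\<lambda>t. - ((1 - t) powr (a+1) / (a+1))) (-1))) {-1..1}"
  proof (rule fundamental_theorem_of_calculus_interior)
    show "-1 \<le> (1::real)" by simp
    show "continuous_on {-1..1} (\<lambda>t. - ((1 - t) powr (a+1) / (a+1)))"
      using a by (intro continuous_intros continuous_on_powr') auto
    show "((\<lambda>t. - ((1 - t) powr (a+1) / (a+1))) has_vector_derivative (1 - x) powr a) (at x)"
      if "x \<in> {-1<..<1}" for x
    proof -
      have "((\<lambda>t. (1 - t) powr (a+1)) has_real_derivative (a+1) * (1-x) powr (a+1-1) * (-1)) (at x)"
        using that by (intro derivative_eq_intros) auto
      then have h: "((\<lambda>t. (1 - t) powr (a+1)) has_real_derivative - ((a+1) * (1-x) powr a)) (at x)"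
        by simp
      have "((\<lambda>t. - ((1 - t) powr (a+1) / (a+1))) has_real_derivative (-(- ((a+1) * (1-x) powr a) / (a+1)))) (at x)"
        by (intro DERIV_minus DERIV_cdivide h)
      then have "((\<lambda>t. - ((1 - t) powr (a+1) / (a+1))) has_real_derivative (1-x) powr a) (at x)"
        using a by simp
      then show ?thesis by (simp add: has_real_derivative_iff_has_vector_derivative)
    qed
  qed
  then have "(\<lambda>t. (1 - t) powr a) integrable_on {-1..1}" by blast
  then show ?thesis by (rule nonnegative_absolutely_integrable_1) auto
qed

lemma powr_integrable_right:
  fixes a :: real assumes a: "a > -1"
  shows "(\<lambda>t. (1 + t) powr a) absolutely_integrable_on {-1..1}"
proof -
  have "((\<lambda>t. (1 + t) powr a) has_integral ((\<lambda>t. ((1 + t) powr (a+1) / (a+1))) 1 - (\<lambda>t. ((1 + t) powr (a+1) / (a+1))) (-1))) {-1..1}"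
  proof (rule fundamental_theorem_of_calculus_interior)
    show "-1 \<le> (1::real)" by simp
    show "continuous_on {-1..1} (\<lambda>t. ((1 + t) powr (a+1) / (a+1)))"
      using a by (intro continuous_intros continuous_on_powr') auto
    show "((\<lambda>t. ((1 + t) powr (a+1) / (a+1))) has_vector_derivative (1 + x) powr a) (at x)"
      if "x \<in> {-1<..<1}" for x
    proof -
      have "((\<lambda>t. (1 + t) powr (a+1)) has_real_derivative (a+1) * (1+x) powr (a+1-1) * 1) (at x)"
        using that by (intro derivative_eq_intros) auto
      then have h: "((\<lambda>t. (1 + t) powr (a+1)) has_real_derivative ((a+1) * (1+x) powr a)) (at x)"
        by simp
      have "((\<lambda>t. ((1 + t) powr (a+1) / (a+1))) has_real_derivative (((a+1) * (1+x) powr a) / (a+1))) (at x)"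
        by (intro DERIV_cdivide h)
      then have "((\<lambda>t. ((1 + t) powr (a+1) / (a+1))) has_real_derivative (1+x) powr a) (at x)"
        using a by simp
      then show ?thesis by (simp add: has_real_derivative_iff_has_vector_derivative)
    qed
  qed
  then have "(\<lambda>t. (1 + t) powr a) integrable_on {-1..1}" by blast
  then show ?thesis by (rule nonnegative_absolutely_integrable_1) auto
qed

lemma weight_le:
  fixes a t :: real assumes a: "a > -1" and t: "t \<in> {-1<..<1}"
  shows "(1 - t\<^sup>2) powr a \<le> (1 - t) powr a + (1 + t) powr a"
proof -
  have p1: "1 - t > 0" "1 + t > 0" using t by auto
  have eq: "(1 - t\<^sup>2) powr a = (1 - t) powr a * (1 + t) powr a"
  proof -
    have "1 - t\<^sup>2 = (1 - t) * (1 + t)" by (simp add: power2_eq_square algebra_simps)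
    then show ?thesis by (simp add: powr_mult)
  qed
  show ?thesis
  proof (cases "a \<ge> 0")
    case True
    have "\<bar>t\<bar> < 1" using t by auto
    then have "t\<^sup>2 < 1" by (simp add: abs_square_less_1)
    then have "\<bar>1 - t\<^sup>2\<bar> \<le> 1" by simp
    then have "(1 - t\<^sup>2) powr a \<le> 1" using True by (intro powr_le1)
    moreover have "1 \<le> (1 - t) powr a + (1 + t) powr a"
    proof (cases "t \<ge> 0")
      case True
      have "1 \<le> (1 + t) powr a" using \<open>a \<ge> 0\<close> True
        by (intro ge_one_powr_ge_zero) auto
      then show ?thesis using p1 by (smt (verit) powr_ge_zero)
    next
      case False
      have "1 \<le> (1 - t) powr a" using \<open>a \<ge> 0\<close> False
        by (intro ge_one_powr_ge_zero) auto
      then show ?thesis using p1 by (smt (verit) powr_ge_zero)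
    qed
    ultimately show ?thesis by linarith
  next
    case False
    show ?thesis
    proof (cases "t \<ge> 0")
      case True
      have "(1 + t) powr a \<le> 1 powr a" using False True by (intro powr_mono2') auto
      then have "(1 - t) powr a * (1 + t) powr a \<le> (1 - t) powr a"
        by (simp add: mult_left_le)
      then show ?thesis using eq by (smt (verit) powr_ge_zero)
    next
      case f2: False
      have "(1 - t) powr a \<le> 1 powr a" using False f2 by (intro powr_mono2') auto
      then have "(1 - t) powr a * (1 + t) powr a \<le> (1 + t) powr a"
        by (simp add: mult_left_le_one_le)
      then show ?thesis using eq by (smt (verit) powr_ge_zero)
    qed
  qed
qed


lemma cont_weight: "continuous_on {-1<..<1} (gegen_weight lam)"
proof -
  have ne: "1 - t\<^sup>2 \<noteq> 0" if "t \<in> {-1<..<1}" for t :: real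
  proof -
    from that have "\<bar>t\<bar> < 1" by auto
    then have "t\<^sup>2 < 1" by (simp add: abs_square_less_1)
    then show ?thesis by simp
  qed
  have c1: "continuous_on {-1<..<1} (\<lambda>t::real. 1 - t\<^sup>2)" by (intro continuous_intros)
  have "continuous_on {-1<..<1} (\<lambda>t::real. (1 - t\<^sup>2) powr (lam - 1/2))"
    by (rule continuous_on_powr[OF c1 continuous_on_const]) (use ne in blast)
  then show ?thesis by (simp add: gegen_weight_def[abs_def])
qed

lemma wf_abs_int:
  assumes lam: "lam > -1/2" and f: "continuous_on {-1..1} f"
  shows "(\<lambda>t. gegen_weight lam t * f t) absolutely_integrable_on {-1<..<1}"
proof -
  obtain B where B: "B \<ge> 0" "\<And>x. x \<in> {-1..1} \<Longrightarrow> norm (f x) \<le> B"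
    using continuous_on_compact_bound[OF compact_Icc f] by blast
  define a where "a = lam - 1/2"
  have a: "a > -1" using lam by (simp add: a_def)
  let ?g = "\<lambda>t. B * ((1 - t) powr a + (1 + t) powr a)"
  have "?g absolutely_integrable_on {-1..1}"
    using powr_integrable_left[OF a] powr_integrable_right[OF a]
    by (intro set_integrable_mult_right set_integral_add(1))
  then have "?g integrable_on {-1..1}"
    using set_lebesgue_integral_eq_integral(1) by blast
  then have gi: "?g integrable_on {-1<..<1}"
    by (simp add: integrable_on_open_interval_real)
  have fc: "continuous_on {-1<..<1} f" by (rule continuous_on_subset[OF f]) auto
  show ?thesis
  proof (rule measurable_bounded_by_integrable_imp_absolutely_integrable[OF _ _ gi])
    show "(\<lambda>t. gegen_weight lam t * f t) \<in> borel_measurable (lebesgue_on {-1<..<1})"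
      using cont_weight fc
      by (intro continuous_imp_measurable_on_sets_lebesgue continuous_intros) auto
    show "{-1<..<1::real} \<in> sets lebesgue" by simp
    fix x :: real assume x: "x \<in> {-1<..<1}"
    have "norm (gegen_weight lam x * f x) = gegen_weight lam x * norm (f x)"
      by (simp add: gegen_weight_def abs_mult)
    also have "\<dots> \<le> ((1 - x) powr a + (1 + x) powr a) * B"
      using weight_le[OF a x] B(2)[of x] x
      by (intro mult_mono) (auto simp: gegen_weight_def a_def)
    finally show "norm (gegen_weight lam x * f x) \<le> ?g x" by (simp add: mult.commute)
  qed
qed

lemma wf_set_int:
  assumes lam: "lam > -1/2" and f: "continuous_on {-1..1} f"
  shows "set_integrable lborel {-1<..<1} (\<lambda>t. gegen_weight lam t * f t)"
proof -
  have fc: "continuous_on {-1<..<1} f" by (rule continuous_on_subset[OF f]) auto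
  have m: "(\<lambda>x. indicat_real {-1<..<1} x *\<^sub>R (gegen_weight lam x * f x)) \<in> borel_measurable borel"
    using cont_weight fc
    by (intro borel_measurable_continuous_on_indicator continuous_intros) auto
  have m': "(\<lambda>x. indicat_real {-1<..<1} x *\<^sub>R (gegen_weight lam x * f x)) \<in> borel_measurable lborel"
    using m by simp
  have "integrable lebesgue (\<lambda>x. indicat_real {-1<..<1} x *\<^sub>R (gegen_weight lam x * f x))"
    using wf_abs_int[OF lam f] by (simp add: set_integrable_def)
  then show ?thesis
    unfolding set_integrable_def using integrable_completion[OF m'] by blast
qed

lemma wf_integral:
  assumes lam: "lam > -1/2" and f: "continuous_on {-1..1} f"
  shows "(LINT t:{-1<..<1}|lborel. gegen_weight lam t * f t) = integral {-1<..<1} (\<lambda>t. gegen_weight lam t * f t)"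
  by (rule set_borel_integral_eq_integral(2)[OF wf_set_int[OF lam f]])


definition II :: "real \<Rightarrow> real poly \<Rightarrow> real" where
  "II lam q = integral {-1<..<1} (\<lambda>t. gegen_weight lam t * poly q t)"

lemma wq_integrable:
  assumes "lam > -1/2"
  shows "(\<lambda>t. gegen_weight lam t * poly q t) integrable_on {-1<..<1}"
proof -
  have "continuous_on {-1..1} (\<lambda>t. poly q t)"
    by (intro continuous_on_poly continuous_on_id)
  then show ?thesis
    using set_lebesgue_integral_eq_integral(1)[OF wf_abs_int[OF assms]] by blast
qed

lemma II_add: "lam > -1/2 \<Longrightarrow> II lam (p + q) = II lam p + II lam q"
  unfolding II_def using wq_integrable[of lam p] wq_integrable[of lam q]
  by (simp add: distrib_left integral_add)

lemma II_smult: "II lam (smult c p) = c * II lam p"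
  unfolding II_def by (simp add: mult.left_commute)

lemma II_minus: "II lam (- p) = - II lam p"
  using II_smult[of lam "-1" p] by simp

lemma II_diff: "lam > -1/2 \<Longrightarrow> II lam (p - q) = II lam p - II lam q"
  using II_add[of lam p "-q"] II_minus[of lam q] by simp

lemma II_0 [simp]: "II lam 0 = 0"
  unfolding II_def by simp

lemma II_sum: "lam > -1/2 \<Longrightarrow> II lam (\<Sum>i\<in>A. f i) = (\<Sum>i\<in>A. II lam (f i))"
  by (induction A rule: infinite_finite_induct) (auto simp: II_add)

lemma II_nonneg:
  assumes "lam > -1/2" "\<And>t. t \<in> {-1<..<1} \<Longrightarrow> poly p t \<ge> 0"
  shows "II lam p \<ge> 0"
  unfolding II_def
  by (rule integral_nonneg[OF wq_integrable[OF assms(1)]])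
     (use assms(2) in \<open>auto simp: gegen_weight_def\<close>)

lemma II_mono:
  assumes "lam > -1/2" "\<And>t. t \<in> {-1<..<1} \<Longrightarrow> poly p t \<le> poly q t"
  shows "II lam p \<le> II lam q"
  using II_nonneg[of lam "q - p"] assms II_diff[of lam q p] by auto

lemma wnorm_poly:
  assumes "lam > -1/2"
  shows "wnorm lam (poly p) = sqrt (II lam (p^2))"
proof -
  have "(LINT t:{-1<..<1}|lborel. gegen_weight lam t * (poly p t)\<^sup>2)
        = integral {-1<..<1} (\<lambda>t. gegen_weight lam t * (poly p t)\<^sup>2)"
    by (rule wf_integral[OF assms]) (intro continuous_intros continuous_on_poly continuous_on_id)
  then show ?thesis by (simp add: wnorm_def II_def)
qed

lemma II_one_pos:
  assumes lam: "lam > -1/2"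
  shows "II lam 1 > 0"
proof -
  define c where "c = min 1 ((3/4) powr (lam - 1/2))"
  have cpos: "c > 0" by (simp add: c_def)
  have le: "c \<le> gegen_weight lam t" if "t \<in> {-1/2..1/2}" for t :: real
  proof -
    have "\<bar>t\<bar> \<le> 1/2" using that by auto
    then have "\<bar>t\<bar>\<^sup>2 \<le> (1/2)\<^sup>2" by (intro power_mono) auto
    then have "t\<^sup>2 \<le> (1/2)\<^sup>2" by simp
    then have h: "3/4 \<le> 1 - t\<^sup>2" "1 - t\<^sup>2 \<le> 1" by (auto simp: power2_eq_square)
    show ?thesis
    proof (cases "lam - 1/2 \<ge> 0")
      case True
      then have "(3/4) powr (lam - 1/2) \<le> (1 - t\<^sup>2) powr (lam - 1/2)"
        using h by (intro powr_mono2) auto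
      then show ?thesis by (simp add: c_def gegen_weight_def)
    next
      case False
      then have "1 powr (lam - 1/2) \<le> (1 - t\<^sup>2) powr (lam - 1/2)"
        using h by (intro powr_mono2') auto
      then show ?thesis by (simp add: c_def gegen_weight_def)
    qed
  qed
  have wi: "(\<lambda>t. gegen_weight lam t * poly 1 t) integrable_on {-1<..<1}"
    by (rule wq_integrable[OF lam])
  then have wi2: "(\<lambda>t. gegen_weight lam t * poly 1 t) integrable_on {-1/2..1/2}"
    by (rule integrable_on_subinterval) auto
  have "integral {-1/2..1/2} (\<lambda>t::real. c) \<le> integral {-1/2..1/2} (\<lambda>t. gegen_weight lam t * poly 1 t)"
    using le wi2 by (intro integral_le) auto
  also have "\<dots> \<le> integral {-1<..<1} (\<lambda>t. gegen_weight lam t * poly 1 t)"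
    using wi2 wi by (intro integral_subset_le) (auto simp: gegen_weight_def)
  finally show ?thesis using cpos by (simp add: II_def)
qed

lemma stein:
  assumes lam: "lam > -1/2"
  shows "II lam ([:1,0,-1:] * pderiv q - smult (2*lam+1) ([:0,1:] * q)) = 0"
proof -
  define a where "a = lam - 1/2"
  have a: "a + 1 > 0" using lam by (simp add: a_def)
  define F where "F = (\<lambda>t::real. (1 - t\<^sup>2) powr (a+1) * poly q t)"
  let ?g = "\<lambda>t. gegen_weight lam t * poly ([:1,0,-1:] * pderiv q - smult (2*lam+1) ([:0,1:] * q)) t"
  have "(?g has_integral (F 1 - F (-1))) {-1..1}"
  proof (rule fundamental_theorem_of_calculus_interior)
    show "-1 \<le> (1::real)" by simp
    have "continuous_on {-1..1} (\<lambda>t::real. (1 - t\<^sup>2) powr (a+1))"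
    proof (rule continuous_on_powr', (intro continuous_intros)+, intro ballI conjI impI)
      fix t :: real assume "t \<in> {-1..1}"
      then have "\<bar>t\<bar> \<le> 1" by auto
      then have "t\<^sup>2 \<le> 1" by (simp add: abs_square_le_1)
      then show "0 \<le> 1 - t\<^sup>2" by simp
    qed (use a in auto)
    then show "continuous_on {-1..1} F" unfolding F_def
      by (rule continuous_on_mult) (intro continuous_on_poly continuous_on_id)
    fix x :: real assume x: "x \<in> {-1<..<1}"
    then have "\<bar>x\<bar> < 1" by auto
    then have "x\<^sup>2 < 1" by (simp add: abs_square_less_1)
    then have xp: "1 - x\<^sup>2 > 0" by simp
    have d0: "((\<lambda>t. 1 - t\<^sup>2) has_real_derivative (- (2 * x))) (at x)"
      by (auto intro!: derivative_eq_intros)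
    have d1: "((\<lambda>t. (1 - t\<^sup>2) powr (a+1)) has_real_derivative (a+1) * (1 - x\<^sup>2) powr (a+1-1) * (- (2 * x))) (at x)"
      using DERIV_chain2[OF has_real_derivative_powr[OF xp, of "a+1"] d0] by simp
    have d2: "(poly q has_real_derivative poly (pderiv q) x) (at x)" by (rule poly_DERIV)
    have dF: "(F has_real_derivative ((a+1) * (1 - x\<^sup>2) powr (a+1-1) * (- (2 * x)) * poly q x + poly (pderiv q) x * (1 - x\<^sup>2) powr (a+1))) (at x)"
      unfolding F_def by (rule DERIV_mult[OF d1 d2])
    have pw: "(1 - x\<^sup>2) powr (a+1) = (1 - x\<^sup>2) powr a * (1 - x\<^sup>2) powr 1"
      by (rule powr_add)
    have gw: "gegen_weight lam x = (1 - x\<^sup>2) powr a" by (simp add: gegen_weight_def a_def)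
    have l: "2 * lam + 1 = 2 * (a + 1)" by (simp add: a_def)
    have "?g x = (a+1) * (1 - x\<^sup>2) powr (a+1-1) * (- (2 * x)) * poly q x + poly (pderiv q) x * (1 - x\<^sup>2) powr (a+1)"
      unfolding pw gw l using xp by (simp add: power2_eq_square algebra_simps)
    with dF have "(F has_real_derivative ?g x) (at x)" by simp
    then show "(F has_vector_derivative ?g x) (at x)"
      by (simp add: has_real_derivative_iff_has_vector_derivative)
  qed
  moreover have "F 1 = 0" "F (-1) = 0" by (simp_all add: F_def)
  ultimately have "(?g has_integral 0) {-1..1}" by simp
  then have "(?g has_integral 0) {-1<..<1}" by (simp add: has_integral_Icc_iff_Ioo)
  then show ?thesis unfolding II_def by (rule integral_unique)
qed

lemma II_shift:
  shows "II (lam + 1) q = II lam ([:1,0,-1:] * q)"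
proof -
  have "gegen_weight (lam+1) t * poly q t = gegen_weight lam t * poly ([:1,0,-1:] * q) t"
    if "t \<in> {-1<..<1}" for t :: real
  proof -
    from that have "\<bar>t\<bar> < 1" by auto
    then have "t\<^sup>2 < 1" by (simp add: abs_square_less_1)
    then have xp: "1 - t\<^sup>2 > 0" by simp
    have "gegen_weight (lam+1) t = (1 - t\<^sup>2) powr ((lam - 1/2) + 1)"
      by (simp add: gegen_weight_def algebra_simps)
    also have "\<dots> = (1 - t\<^sup>2) powr (lam - 1/2) * (1 - t\<^sup>2) powr 1"
      by (rule powr_add)
    also have "\<dots> = (1 - t\<^sup>2) * gegen_weight lam t"
      using xp by (simp add: gegen_weight_def)
    finally have "gegen_weight (lam+1) t = (1 - t\<^sup>2) * gegen_weight lam t" .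
    moreover have "poly ([:1,0,-1:] * q) t = (1 - t\<^sup>2) * poly q t"
      by (simp add: power2_eq_square algebra_simps)
    ultimately show ?thesis by simp
  qed
  then show ?thesis unfolding II_def by (rule integral_cong)
qed


function gc :: "real \<Rightarrow> nat \<Rightarrow> nat \<Rightarrow> real" where
  "gc mu k i = (if k < i then 0 else if i = k then 1 else if Suc i = k then 0
      else real ((i+2)*(i+1)) * gc mu k (i+2) / (real i * (real i + 2*mu) - real k * (real k + 2*mu)))"
  by pat_completeness auto
termination by (relation "Wellfounded.measure (\<lambda>(mu,k,i). k - i)") auto

declare gc.simps [simp del]

lemma gc_above: "k < i \<Longrightarrow> gc mu k i = 0"
  by (subst gc.simps) simp

lemma gc_top [simp]: "gc mu k k = 1"
  by (subst gc.simps) simp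

lemma gc_step: "i + 2 \<le> k \<Longrightarrow> gc mu k i = real ((i+2)*(i+1)) * gc mu k (i+2) / (real i * (real i + 2*mu) - real k * (real k + 2*mu))"
  by (subst gc.simps) simp

lemma gc_parity: "odd (k - i) \<Longrightarrow> gc mu k i = 0"
proof (induction "k - i" arbitrary: i rule: less_induct)
  case less
  show ?case
  proof (cases "k < i")
    case True then show ?thesis by (simp add: gc_above)
  next
    case False
    then have "i \<noteq> k" using less.prems by auto
    show ?thesis
    proof (cases "Suc i = k")
      case True then show ?thesis by (subst gc.simps) simp
    next
      case False
      with \<open>\<not> k < i\<close> \<open>i \<noteq> k\<close> have "i + 2 \<le> k" by auto
      then have "gc mu k (i+2) = 0"
        using less.hyps[of "i+2"] less.prems by auto
      then show ?thesis using \<open>i + 2 \<le> k\<close> by (simp add: gc_step)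
    qed
  qed
qed

lemma gc_rec:
  assumes mu: "mu > -1/2"
  shows "gc mu k i * (real i * (real i + 2*mu) - real k * (real k + 2*mu)) = real ((i+2)*(i+1)) * gc mu k (i+2)"
proof (cases "i + 2 \<le> k")
  case True
  have "real i * (real i + 2*mu) - real k * (real k + 2*mu) = (real i - real k) * (real i + real k + 2*mu)"
    by (simp add: algebra_simps)
  moreover have "real i - real k \<noteq> 0" using True by simp
  moreover have "real i + real k + 2*mu > 0" using True mu by simp
  ultimately have "real i * (real i + 2*mu) - real k * (real k + 2*mu) \<noteq> 0" by simp
  then show ?thesis using True by (simp add: gc_step)
next
  case False
  then have "k < i + 2" by simp
  then have "gc mu k (i+2) = 0" by (simp add: gc_above)
  moreover have "gc mu k i = 0 \<or> i = k"
  proof (cases "k < i")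
    case True then show ?thesis by (simp add: gc_above)
  next
    case False
    then have "i = k \<or> Suc i = k" using \<open>k < i+2\<close> by auto
    then show ?thesis by (auto simp: gc.simps[of mu k i])
  qed
  ultimately show ?thesis by auto
qed

definition gp :: "real \<Rightarrow> nat \<Rightarrow> real poly" where
  "gp mu k = Poly (map (gc mu k) [0..<Suc k])"

lemma coeff_gp: "coeff (gp mu k) i = gc mu k i"
  by (auto simp: gp_def nth_default_def gc_above simp del: upt_Suc)

lemma degree_gp [simp]: "degree (gp mu k) = k"
proof (rule antisym)
  show "degree (gp mu k) \<le> k" by (rule degree_le) (simp add: coeff_gp gc_above)
  show "k \<le> degree (gp mu k)" by (rule le_degree) (simp add: coeff_gp)
qed

lemma lead_gp [simp]: "lead_coeff (gp mu k) = 1"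
  by (simp add: coeff_gp)

lemma gp_0 [simp]: "gp mu 0 = 1"
  by (simp add: gp_def)

lemma gp_1: "gp mu 1 = [:0, 1:]"
  by (rule poly_eqI) (auto simp: coeff_gp gc_above gc_parity coeff_pCons split: nat.splits)


definition X2 :: "real poly" where "X2 = [:1, 0, -1:]"

lemma X2_eq: "X2 * r = r - monom 1 2 * r"
proof -
  have e: "X2 = 1 - monom 1 2"
    by (rule poly_eqI) (auto simp: X2_def coeff_monom coeff_pCons coeff_1 split: nat.splits)
  show ?thesis unfolding e by (simp add: left_diff_distrib)
qed

lemma X1_eq: "[:0, 1:] * r = monom 1 1 * r"
  by (rule poly_eqI) (simp add: coeff_monom_mult coeff_pCons split: nat.split)

lemma poly_X2 [simp]: "poly X2 t = 1 - t\<^sup>2"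
  by (simp add: X2_def power2_eq_square)

lemma degree_X2: "degree X2 = 2"
  by (simp add: X2_def)

definition Lop :: "real \<Rightarrow> real poly \<Rightarrow> real poly" where
  "Lop mu p = X2 * pderiv (pderiv p) - smult (2*mu+1) ([:0,1:] * pderiv p)"

lemma coeff_Lop:
  "coeff (Lop mu p) i = real ((i+2)*(i+1)) * coeff p (i+2) - real i * (real i + 2*mu) * coeff p i"
proof -
  have A: "coeff (X2 * pderiv (pderiv p)) i
        = real ((i+2)*(i+1)) * coeff p (i+2) - real i * (real i - 1) * coeff p i"
  proof (cases "i \<ge> 2")
    case True
    then obtain j where j: "i = j + 2" by (metis add.commute le_add_diff_inverse)
    show ?thesis unfolding X2_eq j coeff_diff coeff_monom_mult
      by (simp add: coeff_pderiv algebra_simps)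
  next
    case False
    then have "i = 0 \<or> i = 1" by auto
    then show ?thesis unfolding X2_eq coeff_diff coeff_monom_mult
      by (auto simp: coeff_pderiv algebra_simps)
  qed
  have B: "coeff ([:0,1:] * pderiv p) i = real i * coeff p i"
  proof (cases i)
    case 0 then show ?thesis by (simp add: X1_eq coeff_monom_mult)
  next
    case (Suc j) then show ?thesis by (simp add: X1_eq coeff_monom_mult coeff_pderiv)
  qed
  show ?thesis unfolding Lop_def coeff_diff coeff_smult A B by (simp add: algebra_simps)
qed

lemma Lop_gp:
  assumes mu: "mu > -1/2"
  shows "Lop mu (gp mu k) = smult (- (real k * (real k + 2*mu))) (gp mu k)"
proof (rule poly_eqI)
  fix i
  show "coeff (Lop mu (gp mu k)) i = coeff (smult (- (real k * (real k + 2*mu))) (gp mu k)) i"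
    unfolding coeff_Lop coeff_smult coeff_gp
    using gc_rec[OF mu, of k i] by (simp add: algebra_simps)
qed


lemma sym_form:
  assumes mu: "mu > -1/2"
  shows "II mu (f * Lop mu g) = - II mu (X2 * pderiv f * pderiv g)"
proof -
  have "X2 * pderiv (f * pderiv g) - smult (2*mu+1) ([:0,1:] * (f * pderiv g))
        = f * Lop mu g + X2 * pderiv f * pderiv g"
    unfolding Lop_def pderiv_mult by (simp add: algebra_simps)
  then have "II mu (f * Lop mu g + X2 * pderiv f * pderiv g) = 0"
    using stein[OF mu, of "f * pderiv g"] by (simp add: X2_def)
  then show ?thesis using II_add[OF mu] by simp
qed

lemma II_sym:
  assumes mu: "mu > -1/2"
  shows "II mu (f * Lop mu g) = II mu (g * Lop mu f)"
  using sym_form[OF mu, of f g] sym_form[OF mu, of g f] by (simp add: mult_ac)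

lemma gp_orth_neq:
  assumes mu: "mu > -1/2" and km: "k \<noteq> m"
  shows "II mu (gp mu k * gp mu m) = 0"
proof -
  have "II mu (gp mu k * Lop mu (gp mu m)) = II mu (gp mu m * Lop mu (gp mu k))"
    by (rule II_sym[OF mu])
  moreover have "II mu (gp mu k * Lop mu (gp mu m)) = (- (real m * (real m + 2*mu))) * II mu (gp mu k * gp mu m)"
    by (simp only: Lop_gp[OF mu] mult_smult_right II_smult)
  moreover have "II mu (gp mu m * Lop mu (gp mu k)) = (- (real k * (real k + 2*mu))) * II mu (gp mu m * gp mu k)"
    by (simp only: Lop_gp[OF mu] mult_smult_right II_smult)
  ultimately have "(- (real m * (real m + 2*mu))) * II mu (gp mu k * gp mu m)
           = (- (real k * (real k + 2*mu))) * II mu (gp mu k * gp mu m)"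
    by (simp add: mult.commute)
  then have "(real k * (real k + 2*mu) - real m * (real m + 2*mu)) * II mu (gp mu k * gp mu m) = 0"
    by (simp add: algebra_simps)
  moreover have "real k * (real k + 2*mu) - real m * (real m + 2*mu) \<noteq> 0"
  proof -
    have "real k * (real k + 2*mu) - real m * (real m + 2*mu) = (real k - real m) * (real k + real m + 2*mu)"
      by (simp add: algebra_simps)
    moreover have "real k - real m \<noteq> 0" using km by simp
    moreover have "real k + real m + 2*mu > 0" using km mu by (cases k; cases m) auto
    ultimately show ?thesis by simp
  qed
  ultimately show ?thesis by simp
qed

lemma gp_span:
  assumes "degree p \<le> d"
  shows "\<exists>x. p = (\<Sum>j\<le>d. smult (x j) (gp mu j))"
  using assms
proof (induction d arbitrary: p)
  case 0
  then obtain c where "p = [:c:]" by (metis degree_eq_zeroE le_zero_eq)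
  then show ?case by (intro exI[of _ "\<lambda>_. c"]) simp
next
  case (Suc d)
  define c where "c = coeff p (Suc d)"
  define p' where "p' = p - smult c (gp mu (Suc d))"
  have "degree p' \<le> d"
  proof (rule degree_le, intro allI impI)
    fix i assume "d < i"
    then show "coeff p' i = 0"
      using Suc.prems
      by (cases "i = Suc d") (auto simp: p'_def c_def coeff_gp gc_above coeff_eq_0)
  qed
  then obtain x where x: "p' = (\<Sum>j\<le>d. smult (x j) (gp mu j))" using Suc.IH by blast
  define x' where "x' = x(Suc d := c)"
  have "(\<Sum>j\<le>Suc d. smult (x' j) (gp mu j)) = (\<Sum>j\<le>d. smult (x j) (gp mu j)) + smult c (gp mu (Suc d))"
    by (simp add: x'_def)
  also have "\<dots> = p" using x by (simp add: p'_def)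
  finally show ?case by metis
qed

lemma coeff_zero_degree:
  assumes "\<And>i. i \<ge> k \<Longrightarrow> coeff r i = 0"
  shows "r = 0 \<or> degree r < k"
proof (cases "r = 0")
  case False
  then have "coeff r (degree r) \<noteq> 0" by simp
  then have "\<not> degree r \<ge> k" using assms by blast
  then show ?thesis by simp
qed simp

lemma ortho_low:
  assumes mu: "mu > -1/2" and q: "q = 0 \<or> degree q < k"
  shows "II mu (gp mu k * q) = 0"
proof (cases "q = 0")
  case False
  with q have dq: "degree q < k" by simp
  then have "degree q \<le> k - 1" by simp
  then obtain x where x: "q = (\<Sum>j\<le>k-1. smult (x j) (gp mu j))" using gp_span by blast
  have "II mu (gp mu k * q) = (\<Sum>j\<le>k-1. x j * II mu (gp mu k * gp mu j))"
    unfolding x sum_distrib_left by (simp add: II_sum[OF mu] II_smult[symmetric] mult_ac)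
  also have "\<dots> = 0"
    using dq by (intro sum.neutral ballI) (auto simp: gp_orth_neq[OF mu])
  finally show ?thesis .
qed simp

definition NN :: "real \<Rightarrow> nat \<Rightarrow> real" where
  "NN mu k = II mu (gp mu k * gp mu k)"

definition sg :: "real \<Rightarrow> nat \<Rightarrow> real" where
  "sg mu k = real ((k+2)*(k+1)) / (4*(real k + 1 + mu)) - real ((k+1)*k) / (4*(real k + mu))"

lemma gc_second:
  assumes mu: "mu > -1/2"
  shows "gc mu (k+2) k = - real ((k+2)*(k+1)) / (4*(real k + 1 + mu))"
proof -
  have "gc mu (k+2) k * (real k * (real k + 2*mu) - real (k+2) * (real (k+2) + 2*mu)) = real ((k+2)*(k+1))"
    using gc_rec[OF mu, of "k+2" k] by simp
  moreover have "real k * (real k + 2*mu) - real (k+2) * (real (k+2) + 2*mu) = - (4*(real k + 1 + mu))"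
    by (simp add: algebra_simps)
  moreover have "4*(real k + 1 + mu) \<noteq> 0" using mu by simp
  ultimately show ?thesis by (simp add: field_simps)
qed

lemma coeff_X1: "coeff ([:0,1:] * (p :: real poly)) i = (if i = 0 then 0 else coeff p (i - 1))"
  unfolding X1_eq coeff_monom_mult by auto

lemma NN_Suc:
  assumes mu: "mu > -1/2"
  shows "NN mu (Suc k) = sg mu k * NN mu k"
proof -
  let ?T = "[:0,1:] :: real poly"
  define r1 where "r1 = gp mu (Suc k) - ?T * gp mu k"
  have "r1 = 0 \<or> degree r1 < Suc k"
  proof (rule coeff_zero_degree)
    fix i assume i: "i \<ge> Suc k"
    show "coeff r1 i = 0"
    proof (cases "i = Suc k")
      case True then show ?thesis by (simp add: r1_def coeff_X1 coeff_gp)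
    next
      case False
      then have "i > Suc k" using i by simp
      then show ?thesis by (simp add: r1_def coeff_pCons coeff_gp gc_above split: nat.split)
    qed
  qed
  then have r1k: "r1 = 0 \<or> degree r1 \<le> k" by auto
  have c1: "coeff r1 k = 0"
    by (cases k) (auto simp: r1_def coeff_X1 coeff_gp gc_parity)
  have r1': "r1 = 0 \<or> degree r1 < k"
  proof (cases "r1 = 0")
    case False
    with r1k have "degree r1 \<le> k" by simp
    moreover have "degree r1 \<noteq> k" using c1 False by (metis leading_coeff_0_iff)
    ultimately show ?thesis by simp
  qed simp
  have e1: "NN mu (Suc k) = II mu (gp mu (Suc k) * (?T * gp mu k))"
  proof -
    have "gp mu (Suc k) * gp mu (Suc k) = gp mu (Suc k) * (?T * gp mu k) + gp mu (Suc k) * r1"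
      by (simp add: r1_def algebra_simps)
    then show ?thesis
      using ortho_low[OF mu, of r1 "Suc k"] r1k II_add[OF mu] by (auto simp: NN_def)
  qed
  define r2 where "r2 = ?T * gp mu (Suc k) - gp mu (Suc (Suc k)) - smult (sg mu k) (gp mu k)"
  have r2': "r2 = 0 \<or> degree r2 < k"
  proof (rule coeff_zero_degree)
    fix i assume i: "i \<ge> k"
    consider "i = k" | "i = Suc k" | "i = Suc (Suc k)" | "i > Suc (Suc k)" using i by linarith
    then show "coeff r2 i = 0"
    proof cases
      case 1
      have g2: "gc mu (k+2) k = - real ((k+2)*(k+1)) / (4*(real k + 1 + mu))" by (rule gc_second[OF mu])
      show ?thesis
      proof (cases k)
        case 0
        then show ?thesis using 1 g2 by (simp add: r2_def coeff_X1 coeff_gp sg_def)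
      next
        case (Suc j)
        have g1: "gc mu (j+2) j = - real ((j+2)*(j+1)) / (4*(real j + 1 + mu))" by (rule gc_second[OF mu])
        have "4 * (real j + 1 + mu) > 0" "4 * (real (Suc j) + 1 + mu) > 0" using mu by auto
        then show ?thesis using 1 g2 g1 Suc by (simp add: r2_def coeff_X1 coeff_gp sg_def) (simp add: field_simps)
      qed
    next
      case 2 then show ?thesis by (simp add: r2_def coeff_X1 coeff_gp gc_parity gc_above)
    next
      case 3 then show ?thesis by (simp add: r2_def coeff_X1 coeff_gp gc_above)
    next
      case 4 then show ?thesis by (simp add: r2_def coeff_pCons coeff_gp gc_above split: nat.split)
    qed
  qed
  have "gp mu (Suc k) * (?T * gp mu k) = gp mu k * gp mu (Suc (Suc k)) + smult (sg mu k) (gp mu k * gp mu k) + gp mu k * r2"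
    by (simp add: r2_def algebra_simps)
  then have "II mu (gp mu (Suc k) * (?T * gp mu k)) = 0 + sg mu k * NN mu k + 0"
    using gp_orth_neq[OF mu, of k "Suc (Suc k)"] ortho_low[OF mu r2'] II_add[OF mu] II_smult
    by (simp add: NN_def)
  then show ?thesis using e1 by simp
qed

lemma sg_pos:
  assumes mu: "mu > -1/2"
  shows "sg mu k > 0"
proof (cases k)
  case 0
  then show ?thesis using mu by (simp add: sg_def)
next
  case (Suc j)
  have p1: "real k + mu > 0" "real k + 1 + mu > 0" using mu Suc by auto
  have "real ((k+2)*(k+1)) * (4*(real k + mu)) - real ((k+1)*k) * (4*(real k + 1 + mu)) = 4 * real (k+1) * (real k + 2*mu)"
    by (simp add: algebra_simps)
  moreover have "4 * real (k+1) * (real k + 2*mu) > 0" using mu Suc by simp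
  ultimately have key: "real ((k+1)*k) * (4*(real k + 1 + mu)) < real ((k+2)*(k+1)) * (4*(real k + mu))" by linarith
  have "real ((k+1)*k) / (4*(real k + mu)) < real ((k+2)*(k+1)) / (4*(real k + 1 + mu))"
    using p1 key by (simp add: frac_less_eq, intro divide_neg_pos, linarith, (intro mult_pos_pos; linarith))
  then show ?thesis by (simp add: sg_def)
qed

lemma NN_pos:
  assumes mu: "mu > -1/2"
  shows "NN mu k > 0"
proof (induction k)
  case 0 then show ?case using II_one_pos[OF mu] by (simp add: NN_def)
next
  case (Suc k) then show ?case using NN_Suc[OF mu] sg_pos[OF mu] by simp
qed


lemma expand_inner:
  assumes mu: "mu > -1/2" and fin: "finite A"
  shows "II mu ((\<Sum>j\<in>A. smult (x j) (gp mu j)) * (\<Sum>j\<in>A. smult (y j) (gp mu j)))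
         = (\<Sum>j\<in>A. x j * y j * NN mu j)"
proof -
  have "(\<Sum>j\<in>A. smult (x j) (gp mu j)) * (\<Sum>j\<in>A. smult (y j) (gp mu j))
        = (\<Sum>i\<in>A. \<Sum>j\<in>A. smult (x i * y j) (gp mu i * gp mu j))"
    by (simp add: sum_product mult_smult_left mult_smult_right mult_ac)
  then have "II mu ((\<Sum>j\<in>A. smult (x j) (gp mu j)) * (\<Sum>j\<in>A. smult (y j) (gp mu j)))
        = (\<Sum>i\<in>A. \<Sum>j\<in>A. x i * y j * II mu (gp mu i * gp mu j))"
    by (simp add: II_sum[OF mu] II_smult)
  also have "\<dots> = (\<Sum>i\<in>A. \<Sum>j\<in>A. if j = i then x i * y i * NN mu i else 0)"
    by (intro sum.cong refl) (auto simp: gp_orth_neq[OF mu] NN_def)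
  also have "\<dots> = (\<Sum>i\<in>A. x i * y i * NN mu i)"
    using fin by (simp add: sum.delta)
  finally show ?thesis .
qed

lemma II_sq_nonneg:
  assumes mu: "mu > -1/2"
  shows "II mu (p * p) \<ge> 0"
  by (rule II_nonneg[OF mu]) simp

lemma definite:
  assumes mu: "mu > -1/2" and z: "II mu (p * p) = 0"
  shows "p = 0"
proof -
  obtain x where x: "p = (\<Sum>j\<le>degree p. smult (x j) (gp mu j))" using gp_span by blast
  have "II mu (p * p) = (\<Sum>j\<le>degree p. x j * x j * NN mu j)"
    by (subst (1 2) x) (rule expand_inner[OF mu], simp)
  then have "(\<Sum>j\<le>degree p. x j * x j * NN mu j) = 0" using z by simp
  moreover have "\<forall>j\<in>{..degree p}. x j * x j * NN mu j \<ge> 0"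
  proof
    fix j assume "j \<in> {..degree p}"
    have "x j * x j \<ge> 0" by simp
    then show "x j * x j * NN mu j \<ge> 0" using NN_pos[OF mu, of j] by simp
  qed
  ultimately have "\<forall>j\<in>{..degree p}. x j * x j * NN mu j = 0"
    using sum_nonneg_eq_0_iff[of "{..degree p}" "\<lambda>j. x j * x j * NN mu j"] by blast
  then have "\<forall>j\<in>{..degree p}. x j = 0"
    using NN_pos[OF mu] by (metis less_irrefl mult_eq_0_iff)
  then show ?thesis by (subst x) simp
qed

lemma II_CS:
  assumes mu: "mu > -1/2"
  shows "(II mu (f * g))\<^sup>2 \<le> II mu (f * f) * II mu (g * g)"
proof (cases "II mu (g * g) = 0")
  case True
  then have "g = 0" by (rule definite[OF mu])
  then show ?thesis by simp
next
  case False
  then have gpos: "II mu (g * g) > 0" using II_sq_nonneg[OF mu, of g] by simp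
  define s where "s = II mu (f * g) / II mu (g * g)"
  have "0 \<le> II mu ((f - smult s g) * (f - smult s g))" by (rule II_sq_nonneg[OF mu])
  also have "(f - smult s g) * (f - smult s g) = f * f - smult (2 * s) (f * g) + smult (s * s) (g * g)"
    by (simp add: algebra_simps smult_add_left[symmetric] mult_smult_left mult_smult_right)
  also have "II mu \<dots> = II mu (f * f) - 2 * s * II mu (f * g) + s * s * II mu (g * g)"
    by (simp add: II_add[OF mu] II_diff[OF mu] II_smult)
  also have "\<dots> = II mu (f * f) - (II mu (f * g))\<^sup>2 / II mu (g * g)"
    using gpos by (simp add: s_def power2_eq_square field_simps)
  finally have "(II mu (f * g))\<^sup>2 / II mu (g * g) \<le> II mu (f * f)" by simp
  then show ?thesis using gpos by (simp add: divide_le_eq)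
qed


lemma gc_deriv:
  assumes lam: "lam > -1/2" and k: "k \<ge> 1"
  shows "real (i+1) * gc lam k (i+1) = real k * gc (lam+1) (k-1) i"
proof (induction "k - i" arbitrary: i rule: less_induct)
  case less
  consider "i \<ge> k" | "i = k - 1" | "i + 2 = k" | "i + 3 \<le> k" using k by linarith
  then show ?case
  proof cases
    case 1 then show ?thesis using gc_above[of "k-1" i "lam+1"] gc_above[of k "i+1" lam] k by simp
  next
    case 2 then show ?thesis using k by simp
  next
    case 3
    then have "k - (i+1) = 1" "k - 1 - i = 1" by auto
    then have "gc lam k (i+1) = 0" "gc (lam+1) (k-1) i = 0" by (auto intro!: gc_parity)
    then show ?thesis by simp
  next
    case 4
    define b where "b = i + 3"
    have lt: "k - (i+2) < k - i" using 4 by simp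
    have IH: "real b * gc lam k b = real k * gc (lam+1) (k-1) (i+2)"
      using less.hyps[OF lt] by (simp add: b_def numeral_3_eq_3)
    have den: "real (i+1) * (real (i+1) + 2*lam) - real k * (real k + 2*lam)
             = real i * (real i + 2*(lam+1)) - real (k-1) * (real (k-1) + 2*(lam+1))"
      using k by (simp add: of_nat_diff algebra_simps)
    have s1: "gc lam k (i+1) = real (b*(i+2)) * gc lam k b / (real (i+1) * (real (i+1) + 2*lam) - real k * (real k + 2*lam))"
      using gc_step[of "i+1" k lam] 4 by (simp add: b_def numeral_3_eq_3)
    have s2: "gc (lam+1) (k-1) i = real ((i+2)*(i+1)) * gc (lam+1) (k-1) (i+2) / (real i * (real i + 2*(lam+1)) - real (k-1) * (real (k-1) + 2*(lam+1)))"
      using gc_step[of i "k-1" "lam+1"] 4 by simp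
    have "real (i+1) * gc lam k (i+1) = real (i+1) * real (i+2) * (real b * gc lam k b) / (real i * (real i + 2*(lam+1)) - real (k-1) * (real (k-1) + 2*(lam+1)))"
      unfolding s1 den by (simp add: algebra_simps)
    also have "\<dots> = real k * gc (lam+1) (k-1) i"
      unfolding IH s2 by (simp add: algebra_simps)
    finally show ?thesis .
  qed
qed

lemma pderiv_gp:
  assumes lam: "lam > -1/2"
  shows "pderiv (gp lam k) = smult (real k) (gp (lam+1) (k - 1))"
proof (cases "k = 0")
  case True then show ?thesis by simp
next
  case False
  show ?thesis
  proof (rule poly_eqI)
    fix i
    show "coeff (pderiv (gp lam k)) i = coeff (smult (real k) (gp (lam+1) (k - 1))) i"
      using gc_deriv[OF lam, of k i] False by (simp add: coeff_pderiv coeff_gp)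
  qed
qed

definition kap :: "real \<Rightarrow> nat \<Rightarrow> real" where
  "kap lam m = gc (lam+1) m (m-2) - gc lam m (m-2)"

lemma connection:
  assumes lam: "lam > -1/2" and m: "m \<ge> 2"
  shows "gp (lam+1) m = gp lam m + smult (kap lam m) (gp (lam+1) (m-2))"
proof -
  have lam1: "lam + 1 > -1/2" using lam by simp
  define X where "X = gp (lam+1) m - gp lam m - smult (kap lam m) (gp (lam+1) (m-2))"
  have Xd: "X = 0 \<or> degree X < m - 2"
  proof (rule coeff_zero_degree)
    fix i assume i: "i \<ge> m - 2"
    consider "i = m - 2" | "i = m - 1" | "i = m" | "i > m" using i m by linarith
    then show "coeff X i = 0"
    proof cases
      case 1 then show ?thesis by (simp add: X_def coeff_gp kap_def)
    next
      case 2 then show ?thesis using m by (simp add: X_def coeff_gp gc_parity gc_above)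
    next
      case 3 then show ?thesis using m by (simp add: X_def coeff_gp gc_above)
    next
      case 4 then show ?thesis using m by (simp add: X_def coeff_gp gc_above)
    qed
  qed
  have XX: "X2 * X = 0 \<or> degree (X2 * X) < m"
  proof (cases "X = 0")
    case False
    have "X2 \<noteq> 0" by (simp add: X2_def)
    then have "degree (X2 * X) = degree X2 + degree X" using False by (rule degree_mult_eq)
    then have "degree (X2 * X) = 2 + degree X" by (simp add: degree_X2)
    then have "degree (X2 * X) < m" using Xd False m by linarith
    then show ?thesis by simp
  qed simp
  have XXe: "X * X = gp (lam+1) m * X - gp lam m * X - smult (kap lam m) (gp (lam+1) (m-2) * X)"
    by (subst (1) X_def) (simp add: left_diff_distrib mult_smult_left)
  have "II (lam+1) (X * X) = II (lam+1) (gp (lam+1) m * X) - II (lam+1) (gp lam m * X)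
          - kap lam m * II (lam+1) (gp (lam+1) (m-2) * X)"
    unfolding XXe by (simp only: II_diff[OF lam1] II_smult)
  also have "II (lam+1) (gp (lam+1) m * X) = 0"
    using Xd by (intro ortho_low[OF lam1]) auto
  also have "II (lam+1) (gp (lam+1) (m-2) * X) = 0"
    using Xd by (intro ortho_low[OF lam1]) auto
  also have "II (lam+1) (gp lam m * X) = II lam (X2 * (gp lam m * X))"
    by (simp only: II_shift X2_def)
  also have "II lam (X2 * (gp lam m * X)) = II lam (gp lam m * (X2 * X))"
    by (subst mult.left_commute) (rule refl)
  also have "\<dots> = 0" by (rule ortho_low[OF lam XX])
  finally have "II (lam+1) (X * X) = 0" by simp
  then have "X = 0" by (rule definite[OF lam1])
  then show ?thesis by (simp add: X_def algebra_simps)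
qed

definition DD :: "real \<Rightarrow> nat \<Rightarrow> real poly" where
  "DD lam k = pderiv (gp lam k)"

definition gam :: "real \<Rightarrow> nat \<Rightarrow> real" where
  "gam lam m = real m * kap lam (m-1) / real (m-2)"

lemma DD_0 [simp]: "DD lam 0 = 0"
  by (simp add: DD_def)

lemma gp_Suc0: "gp mu (Suc 0) = [:0, 1:]"
  using gp_1 by simp

lemma DD_1: "DD lam 1 = 1"
  by (simp add: DD_def gp_Suc0 pderiv_pCons)

lemma II_sq_expand:
  assumes lam: "lam > -1/2"
  shows "II lam ((a + b) * (a + b)) = II lam (a * a) + 2 * II lam (a * b) + II lam (b * b)"
proof -
  have eq: "(a + b) * (a + b) = a * a + (a * b + (a * b + b * b))" by (simp add: algebra_simps)
  show ?thesis unfolding eq II_add[OF lam] by simp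
qed

lemma DD_rec:
  assumes lam: "lam > -1/2" and m: "m \<ge> 2"
  shows "DD lam m = smult (real m) (gp lam (m-1)) + smult (gam lam m) (DD lam (m-2))"
proof (cases "m = 2")
  case True
  then show ?thesis by (simp add: DD_def pderiv_gp[OF lam] gp_Suc0 numeral_2_eq_2)
next
  case False
  then have m3: "m \<ge> 3" using m by simp
  have "DD lam m = smult (real m) (gp (lam+1) (m-1))" by (simp add: DD_def pderiv_gp[OF lam])
  also have "gp (lam+1) (m-1) = gp lam (m-1) + smult (kap lam (m-1)) (gp (lam+1) (m-3))"
    using connection[OF lam, of "m-1"] m3 by (simp add: numeral_3_eq_3)
  finally have e1: "DD lam m = smult (real m) (gp lam (m-1)) + smult (real m * kap lam (m-1)) (gp (lam+1) (m-3))"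
    by (simp add: smult_add_right)
  have e2: "DD lam (m-2) = smult (real (m-2)) (gp (lam+1) (m-3))"
    using m3 by (simp add: DD_def pderiv_gp[OF lam] numeral_3_eq_3 del: of_nat_diff)
  have "real (m-2) \<noteq> 0" using m3 by simp
  then have e3: "gam lam m * real (m-2) = real m * kap lam (m-1)"
    by (simp add: gam_def del: of_nat_diff)
  have "smult (gam lam m) (DD lam (m-2)) = smult (real m * kap lam (m-1)) (gp (lam+1) (m-3))"
    unfolding e2 smult_smult e3 ..
  then show ?thesis using e1 by simp
qed

lemma DD_low:
  assumes lam: "lam > -1/2" and km: "k < m"
  shows "II lam (gp lam (m-1) * DD lam k) = 0"
proof (cases k)
  case 0 then show ?thesis by simp
next
  case (Suc j)
  have "DD lam k = smult (real k) (gp (lam+1) j)" by (simp add: DD_def pderiv_gp[OF lam] Suc)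
  then have "DD lam k = 0 \<or> degree (DD lam k) < m - 1" using km Suc by auto
  then show ?thesis by (rule ortho_low[OF lam])
qed

definition HH :: "real \<Rightarrow> nat \<Rightarrow> nat \<Rightarrow> real" where
  "HH lam k m = II lam (DD lam k * DD lam m)"

lemma HH_sym: "HH lam k m = HH lam m k"
  by (simp add: HH_def mult.commute)

lemma HH_0 [simp]: "HH lam 0 m = 0" "HH lam m 0 = 0"
  by (simp_all add: HH_def)

lemma HH_rec:
  assumes lam: "lam > -1/2" and km: "k < m" and m: "m \<ge> 2"
  shows "HH lam k m = gam lam m * HH lam k (m-2)"
proof -
  have e: "DD lam k * DD lam m = smult (real m) (gp lam (m-1) * DD lam k) + smult (gam lam m) (DD lam k * DD lam (m-2))"
    unfolding DD_rec[OF lam m] by (simp add: distrib_left mult_smult_right mult.commute)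
  have "HH lam k m = real m * II lam (gp lam (m-1) * DD lam k) + gam lam m * HH lam k (m-2)"
    unfolding HH_def e by (simp only: II_add[OF lam] II_smult)
  then show ?thesis using DD_low[OF lam km] by simp
qed

lemma HH_diag:
  assumes lam: "lam > -1/2" and m: "m \<ge> 2"
  shows "HH lam m m = (real m)\<^sup>2 * NN lam (m-1) + (gam lam m)\<^sup>2 * HH lam (m-2) (m-2)"
proof -
  let ?a = "smult (real m) (gp lam (m-1))" and ?b = "smult (gam lam m) (DD lam (m-2))"
  have "HH lam m m = II lam (?a * ?a) + 2 * II lam (?a * ?b) + II lam (?b * ?b)"
    unfolding HH_def DD_rec[OF lam m] by (rule II_sq_expand[OF lam])
  also have "II lam (?a * ?a) = (real m)\<^sup>2 * NN lam (m-1)"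
    by (simp add: NN_def II_smult mult_smult_left mult_smult_right power2_eq_square)
  also have "II lam (?b * ?b) = (gam lam m)\<^sup>2 * HH lam (m-2) (m-2)"
    by (simp add: HH_def II_smult mult_smult_left mult_smult_right power2_eq_square)
  also have "II lam (?a * ?b) = real m * gam lam m * II lam (gp lam (m-1) * DD lam (m-2))"
    by (simp add: II_smult mult_smult_left mult_smult_right)
  also have "II lam (gp lam (m-1) * DD lam (m-2)) = 0" using m by (intro DD_low[OF lam]) simp
  finally show ?thesis by simp
qed

lemma HH_11: "HH lam 1 1 = NN lam 0"
  by (simp add: HH_def NN_def DD_1 del: One_nat_def)


lemma HH_parity_aux:
  assumes lam: "lam > -1/2"
  shows "\<forall>k m. k + m \<le> N \<longrightarrow> odd (k + m) \<longrightarrow> k < m \<longrightarrow> HH lam k m = 0"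
proof (induction N)
  case 0 then show ?case by simp
next
  case (Suc N)
  show ?case
  proof (intro allI impI)
    fix k m assume le: "k + m \<le> Suc N" and od: "odd (k + m)" and km: "k < m"
    show "HH lam k m = 0"
    proof (cases "m \<ge> 2")
      case True
      have od2: "odd (k + (m - 2))" using od True by presburger
      have le2: "k + (m - 2) \<le> N" using le True by simp
      show ?thesis
      proof (cases "k < m - 2")
        case True
        then have "HH lam k (m-2) = 0" using Suc.IH le2 od2 by blast
        then show ?thesis using HH_rec[OF lam km \<open>m \<ge> 2\<close>] by simp
      next
        case False
        then have "k = m - 1" using km od2 by presburger
        then have "m - 2 < k" using True by simp
        have "odd ((m - 2) + k)" using od2 by (simp add: add.commute)
        then have "HH lam (m-2) k = 0" using Suc.IH le2 \<open>m - 2 < k\<close> by (simp add: add.commute)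
        then have "HH lam k (m-2) = 0" by (simp add: HH_sym)
        then show ?thesis using HH_rec[OF lam km \<open>m \<ge> 2\<close>] by simp
      qed
    next
      case False
      then have "k = 0" using km by simp
      then show ?thesis by simp
    qed
  qed
qed

lemma HH_parity:
  assumes lam: "lam > -1/2" and od: "odd (k + m)"
  shows "HH lam k m = 0"
proof (cases "k < m")
  case True
  then show ?thesis using HH_parity_aux[OF lam, of "k+m"] od by blast
next
  case False
  then have "m < k" using od by presburger
  moreover have "odd (m + k)" using od by (simp add: add.commute)
  ultimately have "HH lam m k = 0" using HH_parity_aux[OF lam, of "m+k"] by blast
  then show ?thesis by (simp add: HH_sym)
qed


lemma rat_sg:
  fixes x mu :: real
  assumes "x + mu \<noteq> 0" "x + 1 + mu \<noteq> 0"
  shows "(x+2)*(x+1)/(4*(x+1+mu)) - (x+1)*x/(4*(x+mu)) = (x+1)*(x+2*mu)/(4*(x+mu)*(x+1+mu))"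
  using assms by (simp add: divide_simps, (algebra)?)

lemma rat_kap:
  fixes x l a :: real
  assumes "x + 1 + l \<noteq> 0" "x + 2 + l \<noteq> 0"
  shows "(- a)/(4*(x+1+(l+1))) - (- a)/(4*(x+1+l)) = a/(4*(x+1+l)*(x+2+l))"
  using assms by (simp add: divide_simps, (algebra)?)

lemma rat_gam:
  fixes x l :: real
  assumes "x - 2 \<noteq> 0"
  shows "x * ((x-1)*(x-2)/(4*(x-2+l)*(x-1+l))) / (x-2) = x*(x-1)/(4*(x-2+l)*(x-1+l))"
  using assms by (simp add: divide_simps)

lemma rat_rho:
  fixes x l :: real
  assumes "x \<noteq> 0" "x - 1 \<noteq> 0" "x - 2 + l \<noteq> 0" "x - 1 + l \<noteq> 0" "x + l \<noteq> 0"
    "x - 2 + 2*l \<noteq> 0" "x - 1 + 2*l \<noteq> 0"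
  shows "(x*(x-1)/(4*(x-2+l)*(x-1+l)))\<^sup>2 / (((x-1)*(x-2+2*l)/(4*(x-2+l)*(x-1+l))) * (x*(x-1+2*l)/(4*(x-1+l)*(x+l))))
         = x*(x-1)*(x+l)/((x-2+l)*(x-2+2*l)*(x-1+2*l))"
proof -
  define B1 where "B1 = 4*(x-1+l)*(x+l)"
  define B2 where "B2 = 4*(x-2+l)*(x-1+l)"
  have nz: "B1 \<noteq> 0" "B2 \<noteq> 0" using assms by (auto simp: B1_def B2_def)
  have h1: "(x*(x-1)/B2)\<^sup>2 / (((x-1)*(x-2+2*l)/B2) * (x*(x-1+2*l)/B1)) = x*(x-1)*B1/(B2*(x-2+2*l)*(x-1+2*l))"
    using nz assms by (simp add: divide_simps power2_eq_square)
  have b1: "B1 = (x+l)*(4*(x-1+l))" unfolding B1_def by algebra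
  have b2: "B2 = (x-2+l)*(4*(x-1+l))" unfolding B2_def by algebra
  have h2: "B1/B2 = (x+l)/(x-2+l)" unfolding b1 b2 using assms by simp
  have h3: "x*(x-1)*B1/(B2*(x-2+2*l)*(x-1+2*l)) = x*(x-1)*(B1/B2)/((x-2+2*l)*(x-1+2*l))"
    by (simp add: divide_simps)
  have "(x*(x-1)/B2)\<^sup>2 / (((x-1)*(x-2+2*l)/B2) * (x*(x-1+2*l)/B1)) = x*(x-1)*(x+l)/((x-2+l)*(x-2+2*l)*(x-1+2*l))"
    unfolding h1 h3 h2 by (simp add: divide_simps)
  then show ?thesis unfolding B1_def B2_def .
qed

lemma rat_a1:
  fixes x l :: real
  assumes "x \<noteq> 0" "x - 1 + l \<noteq> 0" "x + l \<noteq> 0" "x - 1 + 2*l \<noteq> 0"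
  shows "x\<^sup>2 / (x*(x-1+2*l)/(4*(x-1+l)*(x+l))) = 4*x*(x-1+l)*(x+l)/(x-1+2*l)"
  using assms by (simp add: divide_simps power2_eq_square, (algebra)?)

lemma sg_formula:
  assumes mu: "mu > -1/2" and k: "k \<ge> 1"
  shows "sg mu k = real (k+1) * (real k + 2*mu) / (4*(real k + mu)*(real k + 1 + mu))"
proof -
  have nz: "real k + mu \<noteq> 0" "real k + 1 + mu \<noteq> 0" using mu k by auto
  have "sg mu k = (real k+2)*(real k+1)/(4*(real k+1+mu)) - (real k+1)*real k/(4*(real k+mu))"
    by (simp add: sg_def algebra_simps)
  also have "\<dots> = (real k+1)*(real k+2*mu)/(4*(real k+mu)*(real k+1+mu))" by (rule rat_sg[OF nz])
  finally show ?thesis by (simp add: add_ac)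
qed

lemma sg_0:
  assumes mu: "mu > -1/2"
  shows "sg mu 0 = 1 / (2 * (1 + mu))"
proof -
  have nz: "1 + mu \<noteq> 0" using mu by auto
  show ?thesis unfolding sg_def by (simp add: divide_simps nz)
qed

lemma kap_formula:
  assumes lam: "lam > -1/2" and m: "m \<ge> 2"
  shows "kap lam m = real m * (real m - 1) / (4*(real m - 1 + lam)*(real m + lam))"
proof -
  obtain j where j: "m = j + 2" using m by (metis add.commute le_add_diff_inverse)
  have lam1: "lam + 1 > -1/2" using lam by simp
  have nz: "real j + 1 + lam \<noteq> 0" "real j + 2 + lam \<noteq> 0" using lam by auto
  have e: "j + 2 - 2 = j" by simp
  have "kap lam m = (- real ((j+2)*(j+1)))/(4*(real j+1+(lam+1))) - (- real ((j+2)*(j+1)))/(4*(real j+1+lam))"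
    unfolding kap_def j e gc_second[OF lam] gc_second[OF lam1] ..
  also have "\<dots> = real ((j+2)*(j+1))/(4*(real j+1+lam)*(real j+2+lam))" by (rule rat_kap[OF nz])
  finally show ?thesis by (simp add: j algebra_simps)
qed

lemma gam_formula:
  assumes lam: "lam > -1/2" and m: "m \<ge> 3"
  shows "gam lam m = real m * (real m - 1) / (4*(real m - 2 + lam)*(real m - 1 + lam))"
proof -
  have "kap lam (m-1) = real (m-1) * (real (m-1) - 1) / (4*(real (m-1) - 1 + lam)*(real (m-1) + lam))"
    using m by (intro kap_formula[OF lam]) auto
  then have k: "kap lam (m-1) = (real m - 1) * (real m - 2) / (4*(real m - 2 + lam)*(real m - 1 + lam))"
    using m by (simp add: of_nat_diff algebra_simps)
  have r: "real (m - 2) = real m - 2" using m by simp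
  have nz: "real m - 2 \<noteq> 0" using m by auto
  show ?thesis unfolding gam_def k r by (rule rat_gam[OF nz])
qed

definition aa :: "real \<Rightarrow> nat \<Rightarrow> real" where
  "aa lam m = HH lam m m / NN lam m"

definition M2 :: "real \<Rightarrow> nat \<Rightarrow> nat \<Rightarrow> real" where
  "M2 lam k m = (HH lam k m)\<^sup>2 / (NN lam k * NN lam m)"

definition rho :: "real \<Rightarrow> nat \<Rightarrow> real" where
  "rho lam m = (gam lam m)\<^sup>2 / (sg lam (m-2) * sg lam (m-1))"

lemma NN_2:
  assumes lam: "lam > -1/2" and m: "m \<ge> 2"
  shows "NN lam m = sg lam (m-1) * sg lam (m-2) * NN lam (m-2)"
proof -
  obtain j where j: "m = Suc (Suc j)" using m by (metis add_2_eq_Suc le_Suc_ex)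
  show ?thesis unfolding j using NN_Suc[OF lam, of "Suc j"] NN_Suc[OF lam, of j] by simp
qed

lemma aa_rec:
  assumes lam: "lam > -1/2" and m: "m \<ge> 2"
  shows "aa lam m = (real m)\<^sup>2 / sg lam (m-1) + rho lam m * aa lam (m-2)"
proof -
  have s1: "sg lam (m-1) > 0" "sg lam (m-2) > 0" using sg_pos[OF lam] by auto
  have n2: "NN lam (m-2) > 0" by (rule NN_pos[OF lam])
  have n1: "NN lam (m-1) = sg lam (m-2) * NN lam (m-2)"
    using NN_Suc[OF lam, of "m-2"] m by (simp add: Suc_diff_Suc numeral_2_eq_2)
  have nm: "NN lam m = sg lam (m-1) * sg lam (m-2) * NN lam (m-2)" by (rule NN_2[OF lam m])
  have nz: "sg lam (m-1) \<noteq> 0" "sg lam (m-2) \<noteq> 0" "NN lam (m-2) \<noteq> 0" using s1 n2 by auto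
  show ?thesis
    unfolding aa_def rho_def HH_diag[OF lam m] nm n1
    by (simp add: divide_simps nz power2_eq_square; algebra)
qed

lemma M2_rec:
  assumes lam: "lam > -1/2" and m: "m \<ge> 2" and km: "k < m"
  shows "M2 lam k m = rho lam m * M2 lam k (m-2)"
proof -
  have s1: "sg lam (m-1) > 0" "sg lam (m-2) > 0" using sg_pos[OF lam] by auto
  have n2: "NN lam (m-2) > 0" "NN lam k > 0" using NN_pos[OF lam] by auto
  have nm: "NN lam m = sg lam (m-1) * sg lam (m-2) * NN lam (m-2)" by (rule NN_2[OF lam m])
  have nz: "sg lam (m-1) \<noteq> 0" "sg lam (m-2) \<noteq> 0" "NN lam (m-2) \<noteq> 0" "NN lam k \<noteq> 0" using s1 n2 by auto
  show ?thesis
    unfolding M2_def rho_def HH_rec[OF lam km m] nm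
    by (simp add: divide_simps nz power2_eq_square; algebra)
qed

lemma M2_sym: "M2 lam k m = M2 lam m k"
  by (simp add: M2_def HH_sym mult.commute)

lemma M2_diag: "M2 lam m m = (aa lam m)\<^sup>2"
  by (simp add: M2_def aa_def power2_eq_square)

lemma rho_formula:
  assumes lam: "lam > -1/2" and m: "m \<ge> 3"
  shows "rho lam m = real m * (real m - 1) * (real m + lam) / ((real m - 2 + lam) * (real m - 2 + 2*lam) * (real m - 1 + 2*lam))"
    and "(real m)\<^sup>2 / sg lam (m-1) = 4 * real m * (real m - 1 + lam) * (real m + lam) / (real m - 1 + 2*lam)"
proof -
  have s1: "sg lam (m-1) = real m * (real m - 1 + 2*lam) / (4*(real m - 1 + lam)*(real m + lam))"
    using sg_formula[OF lam, of "m-1"] m by (simp add: of_nat_diff algebra_simps)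
  have s2: "sg lam (m-2) = (real m - 1) * (real m - 2 + 2*lam) / (4*(real m - 2 + lam)*(real m - 1 + lam))"
    using sg_formula[OF lam, of "m-2"] m by (simp add: of_nat_diff algebra_simps)
  have g: "gam lam m = real m * (real m - 1) / (4*(real m - 2 + lam)*(real m - 1 + lam))"
    by (rule gam_formula[OF lam m])
  have p: "real m - 2 + lam > 0" "real m - 1 + lam > 0" "real m + lam > 0"
          "real m - 2 + 2*lam > 0" "real m - 1 + 2*lam > 0" "real m - 1 > 0" "real m > 0"
    using lam m by auto
  have nz: "real m - 2 + lam \<noteq> 0" "real m - 1 + lam \<noteq> 0" "real m + lam \<noteq> 0"
          "real m - 2 + 2*lam \<noteq> 0" "real m - 1 + 2*lam \<noteq> 0" "real m - 1 \<noteq> 0" "real m \<noteq> 0"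
    using p by auto
  show "rho lam m = real m * (real m - 1) * (real m + lam) / ((real m - 2 + lam) * (real m - 2 + 2*lam) * (real m - 1 + 2*lam))"
    unfolding rho_def s1 s2 g by (rule rat_rho) (use nz in auto)
  show "(real m)\<^sup>2 / sg lam (m-1) = 4 * real m * (real m - 1 + lam) * (real m + lam) / (real m - 1 + 2*lam)"
    unfolding s1 by (rule rat_a1) (use nz in auto)
qed


definition Aq :: "real \<Rightarrow> real \<Rightarrow> real" where
  "Aq x l = 2*x*(x+l)*(x+2*l)/(2*l+1)"

definition Dn :: "real \<Rightarrow> real" where
  "Dn l = (2*l+1)^2*(2*l+3)*(2*l+5)"

definition A2D :: "real \<Rightarrow> real \<Rightarrow> real" where
  "A2D x l = 4*x^2*(x+l)^2*(x+2*l)^2*(2*l+3)*(2*l+5)"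

definition Rp :: "real \<Rightarrow> real \<Rightarrow> real" where
  "Rp x l = - 32*x*l^2 - 96*x*l^3 - 64*x*l^4 - 48*x^2*l - 144*x^2*l^2 + 64*x^2*l^3 + 368*x^2*l^4 + 256*x^2*l^5 + 64*x^2*l^6 - 16*x^3 - 48*x^3*l + 288*x^3*l^2 + 856*x^3*l^3 + 688*x^3*l^4 + 192*x^3*l^5 + 200*x^4*l + 700*x^4*l^2 + 696*x^4*l^3 + 224*x^4*l^4 + 40*x^5 + 242*x^5*l + 332*x^5*l^2 + 128*x^5*l^3 + 30*x^6 + 74*x^6*l + 36*x^6*l^2 + 6*x^7 + 4*x^7*l"

definition Gp :: "real \<Rightarrow> real \<Rightarrow> real" where
  "Gp x l = - 224/3*x*l - 752/3*x*l^2 - 608/3*x*l^3 + 112/3*x*l^4 + 256/3*x*l^5 + 64/3*x*l^6 - 112/3*x^2 - 472/3*x^2*l - 176/3*x^2*l^2 + 1216/3*x^2*l^3 + 520*x^2*l^4 + 224*x^2*l^5 + 32*x^2*l^6 - 16*x^3 + 272/3*x^3*l + 1736/3*x^3*l^2 + 2672/3*x^3*l^3 + 1640/3*x^3*l^4 + 416/3*x^3*l^5 + 32/3*x^3*l^6 + 104/3*x^4 + 818/3*x^4*l + 1846/3*x^4*l^2 + 1612/3*x^4*l^3 + 196*x^4*l^4 + 24*x^4*l^5 + 40*x^5 + 186*x^5*l + 258*x^5*l^2 + 136*x^5*l^3 + 24*x^5*l^4 + 62/3*x^6 + 185/3*x^6*l + 154/3*x^6*l^2 + 40/3*x^6*l^3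 + 6*x^7 + 10*x^7*l + 4*x^7*l^2 + 3/4*x^8 + 1/2*x^8*l"

definition Tp :: "real \<Rightarrow> real \<Rightarrow> real" where
  "Tp x l = 2*x*l + 2*x*l^2 + 1*x^2 + 3*x^2*l + 1*x^2*l^2 + 1*x^3 + 1*x^3*l + 1/4*x^4"

lemma Aq_sq: "l > -1/2 \<Longrightarrow> (Aq x l)\<^sup>2 * Dn l = A2D x l"
  by (simp add: Aq_def Dn_def A2D_def divide_simps power2_eq_square)

lemma Dn_pos: "l > -1/2 \<Longrightarrow> Dn l > 0"
  by (simp add: Dn_def)

lemma Rp_0: "Rp 0 l = 0" by (simp add: Rp_def)
lemma Gp_0: "Gp 0 l = 0" by (simp add: Gp_def)
lemma Tp_0: "Tp 0 l = 0" by (simp add: Tp_def)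
lemma Rp_1: "Rp 1 l = 4*(1+l)^2 * Dn l" by (simp add: Rp_def Dn_def; algebra)
lemma Rp_2: "Rp 2 l = A2D 2 l" unfolding Rp_def A2D_def by algebra
lemma Gp_1: "Gp 1 l - Gp (-1) l = 4*(1+l)^2 * Dn l" by (simp add: Gp_def Dn_def; algebra)
lemma Gp_step: "Gp x l - Gp (x-2) l = 2 * Rp x l - A2D x l" unfolding Gp_def Rp_def A2D_def by algebra
lemma Tp_step: "Tp x l - Tp (x-2) l = 2*x*(x+l)*(x+2*l)" unfolding Tp_def by algebra

lemma Aq_step:
  fixes x l :: real
  assumes "x - 2 + l \<noteq> 0" "x - 1 + l \<noteq> 0" "x + l \<noteq> 0" "x - 2 + 2*l \<noteq> 0" "x - 1 + 2*l \<noteq> 0" "2*l+1 \<noteq> 0"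
  shows "Aq x l = 4*x*(x-1+l)*(x+l)/(x-1+2*l) + x*(x-1)*(x+l)/((x-2+l)*(x-2+2*l)*(x-1+2*l)) * Aq (x-2) l"
  unfolding Aq_def using assms by (simp add: divide_simps) algebra

lemma Rp_step:
  fixes x l :: real
  assumes "x - 2 + l \<noteq> 0" "x - 2 + 2*l \<noteq> 0" "x - 1 + 2*l \<noteq> 0" "Dn l \<noteq> 0"
  shows "Rp x l / Dn l = A2D x l / Dn l + x*(x-1)*(x+l)/((x-2+l)*(x-2+2*l)*(x-1+2*l)) * (Rp (x-2) l / Dn l)"
proof -
  have "Rp x l * ((x-2+l)*(x-2+2*l)*(x-1+2*l)) = A2D x l * ((x-2+l)*(x-2+2*l)*(x-1+2*l)) + x*(x-1)*(x+l) * Rp (x-2) l"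
    unfolding Rp_def A2D_def by algebra
  then show ?thesis using assms by (simp add: divide_simps)
qed


definition Cset :: "nat \<Rightarrow> nat set" where
  "Cset m = {k. k \<le> m \<and> even (m - k)}"

lemma Cset_fin [simp]: "finite (Cset m)"
  by (simp add: Cset_def)

lemma Cset_0: "Cset 0 = {0}"
  by (auto simp: Cset_def)

lemma Cset_1: "Cset 1 = {1}"
  unfolding Cset_def by (auto; presburger)

lemma Cset_Suc0 [simp]: "Cset (Suc 0) = {Suc 0}"
  using Cset_1 by simp

lemma HH_Suc0: "HH lam (Suc 0) (Suc 0) = NN lam 0"
  using HH_11 by simp

lemma Cset_step:
  assumes "m \<ge> 2"
  shows "Cset m = insert m (Cset (m-2))" "m \<notin> Cset (m-2)"
proof -
  show "Cset m = insert m (Cset (m-2))"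
  proof (intro set_eqI iffI)
    fix k assume "k \<in> Cset m"
    then have "k \<le> m" "even (m - k)" by (auto simp: Cset_def)
    then show "k \<in> insert m (Cset (m-2))" using assms unfolding Cset_def by (auto; presburger)
  next
    fix k assume "k \<in> insert m (Cset (m-2))"
    then show "k \<in> Cset m" using assms unfolding Cset_def by (auto; presburger)
  qed
  show "m \<notin> Cset (m-2)" using assms by (auto simp: Cset_def)
qed

lemma Cset_le: "k \<in> Cset m \<Longrightarrow> k \<le> m"
  by (simp add: Cset_def)

definition rr :: "real \<Rightarrow> nat \<Rightarrow> real" where
  "rr lam m = (\<Sum>k\<in>Cset m. M2 lam k m)"

definition Fs :: "real \<Rightarrow> nat \<Rightarrow> real" where
  "Fs lam m = (\<Sum>k\<in>Cset m. \<Sum>j\<in>Cset m. M2 lam k j)"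

definition Tr :: "real \<Rightarrow> nat \<Rightarrow> real" where
  "Tr lam m = (\<Sum>k\<in>Cset m. aa lam k)"

lemma rr_rec:
  assumes lam: "lam > -1/2" and m: "m \<ge> 2"
  shows "rr lam m = (aa lam m)\<^sup>2 + rho lam m * rr lam (m-2)"
proof -
  have "rr lam m = M2 lam m m + (\<Sum>k\<in>Cset (m-2). M2 lam k m)"
    unfolding rr_def Cset_step(1)[OF m] using Cset_step(2)[OF m] by simp
  also have "(\<Sum>k\<in>Cset (m-2). M2 lam k m) = (\<Sum>k\<in>Cset (m-2). rho lam m * M2 lam k (m-2))"
  proof (intro sum.cong refl)
    fix k assume "k \<in> Cset (m-2)"
    then have "k < m" using Cset_le[of k "m-2"] m by simp
    then show "M2 lam k m = rho lam m * M2 lam k (m-2)" by (rule M2_rec[OF lam m])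
  qed
  finally show ?thesis by (simp add: M2_diag rr_def sum_distrib_left)
qed

lemma Fs_rec:
  assumes lam: "lam > -1/2" and m: "m \<ge> 2"
  shows "Fs lam m = Fs lam (m-2) + 2 * rr lam m - (aa lam m)\<^sup>2"
proof -
  let ?C = "Cset (m-2)"
  have nin: "m \<notin> ?C" by (rule Cset_step(2)[OF m])
  have r: "rr lam m = M2 lam m m + (\<Sum>k\<in>?C. M2 lam k m)"
    unfolding rr_def Cset_step(1)[OF m] using nin by simp
  have "Fs lam m = (\<Sum>j\<in>insert m ?C. M2 lam m j) + (\<Sum>k\<in>?C. \<Sum>j\<in>insert m ?C. M2 lam k j)"
    unfolding Fs_def Cset_step(1)[OF m] using nin by simp
  also have "(\<Sum>j\<in>insert m ?C. M2 lam m j) = M2 lam m m + (\<Sum>k\<in>?C. M2 lam k m)"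
    using nin by (simp add: M2_sym)
  also have "(\<Sum>k\<in>?C. \<Sum>j\<in>insert m ?C. M2 lam k j) = (\<Sum>k\<in>?C. M2 lam k m) + Fs lam (m-2)"
    using nin by (simp add: sum.distrib Fs_def)
  finally show ?thesis using r by (simp add: M2_diag)
qed

lemma Tr_rec:
  assumes m: "m \<ge> 2"
  shows "Tr lam m = Tr lam (m-2) + aa lam m"
  unfolding Tr_def Cset_step(1)[OF m] using Cset_step(2)[OF m] by simp

lemma aa_0: "aa lam 0 = 0" by (simp add: aa_def)

lemma Aq_1:
  assumes "l > -1/2" shows "Aq 1 l = 2*(1+l)"
proof -
  have "2*l+1 \<noteq> 0" using assms by simp
  then show ?thesis by (simp add: Aq_def divide_simps algebra_simps)
qed

lemma aa_closed:
  assumes lam: "lam > -1/2"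
  shows "aa lam m = Aq (real m) lam"
proof (induction m rule: less_induct)
  case (less m)
  have l2: "2*lam+1 \<noteq> 0" using lam by simp
  consider "m = 0" | "m = 1" | "m = 2" | "m \<ge> 3" by linarith
  then show ?case
  proof cases
    case 1 then show ?thesis by (simp add: aa_0 Aq_def)
  next
    case 2
    have "aa lam 1 = NN lam 0 / NN lam 1" by (simp add: aa_def HH_Suc0)
    also have "\<dots> = 1 / sg lam 0" using NN_Suc[OF lam, of 0] NN_pos[OF lam, of 0] by simp
    also have "\<dots> = 2 * (1 + lam)" using sg_0[OF lam] lam by simp
    finally show ?thesis using 2 Aq_1[OF lam] by simp
  next
    case 3
    have "aa lam 2 = 4 / sg lam 1" using aa_rec[OF lam, of 2] by (simp add: aa_0)
    also have "sg lam 1 = 2 * (1 + 2*lam) / (4*(1+lam)*(2+lam))"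
      using sg_formula[OF lam, of 1] by (simp add: add_ac)
    finally have "aa lam 2 = 4 / (2 * (1 + 2*lam) / (4*(1+lam)*(2+lam)))" .
    moreover have "4 / (2 * (1 + 2*lam) / (4*(1+lam)*(2+lam))) = Aq 2 lam"
    proof -
      have "1 + lam \<noteq> 0" "2 + lam \<noteq> 0" "1 + 2*lam \<noteq> 0" "2*lam + 1 \<noteq> 0" using lam by auto
      then show ?thesis by (simp add: Aq_def divide_simps; simp add: algebra_simps)
    qed
    ultimately show ?thesis using 3 by simp
  next
    case 4
    have IH: "aa lam (m-2) = Aq (real m - 2) lam" using less.IH[of "m-2"] 4 by (simp add: of_nat_diff)
    have nz: "real m - 2 + lam \<noteq> 0" "real m - 1 + lam \<noteq> 0" "real m + lam \<noteq> 0"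
      "real m - 2 + 2*lam \<noteq> 0" "real m - 1 + 2*lam \<noteq> 0" "2*lam+1 \<noteq> 0" using lam 4 by auto
    have "aa lam m = (real m)\<^sup>2 / sg lam (m-1) + rho lam m * aa lam (m-2)"
      using aa_rec[OF lam, of m] 4 by simp
    also have "\<dots> = 4 * real m * (real m - 1 + lam) * (real m + lam) / (real m - 1 + 2*lam)
         + real m * (real m - 1) * (real m + lam) / ((real m - 2 + lam) * (real m - 2 + 2*lam) * (real m - 1 + 2*lam)) * Aq (real m - 2) lam"
      unfolding IH rho_formula[OF lam 4] ..
    also have "\<dots> = Aq (real m) lam" by (rule Aq_step[OF nz, symmetric])
    finally show ?thesis .
  qed
qed

lemma rr_closed:
  assumes lam: "lam > -1/2"
  shows "rr lam m = Rp (real m) lam / Dn lam"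
proof (induction m rule: less_induct)
  case (less m)
  have D: "Dn lam > 0" by (rule Dn_pos[OF lam])
  consider "m = 0" | "m = 1" | "m = 2" | "m \<ge> 3" by linarith
  then show ?case
  proof cases
    case 1 then show ?thesis by (simp add: rr_def Cset_0 M2_def Rp_0)
  next
    case 2
    have "rr lam 1 = (aa lam 1)\<^sup>2" by (simp add: rr_def Cset_1 M2_diag)
    also have "\<dots> = 4*(1+lam)^2" using aa_closed[OF lam, of 1] Aq_1[OF lam] by (simp add: power2_eq_square algebra_simps)
    finally show ?thesis using 2 D by (simp add: Rp_1)
  next
    case 3
    have "rr lam 2 = (aa lam 2)\<^sup>2" using rr_rec[OF lam, of 2] by (simp add: rr_def Cset_0 M2_def)
    also have "\<dots> = A2D 2 lam / Dn lam" using aa_closed[OF lam, of 2] Aq_sq[OF lam, of 2] D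
      by (simp add: eq_divide_eq)
    finally show ?thesis using 3 by (simp add: Rp_2)
  next
    case 4
    have IH: "rr lam (m-2) = Rp (real m - 2) lam / Dn lam" using less.IH[of "m-2"] 4 by (simp add: of_nat_diff)
    have nz: "real m - 2 + lam \<noteq> 0" "real m - 2 + 2*lam \<noteq> 0" "real m - 1 + 2*lam \<noteq> 0" "Dn lam \<noteq> 0"
      using lam 4 D by auto
    have a2: "(aa lam m)\<^sup>2 = A2D (real m) lam / Dn lam"
      using aa_closed[OF lam, of m] Aq_sq[OF lam, of "real m"] D by (simp add: eq_divide_eq)
    have "rr lam m = (aa lam m)\<^sup>2 + rho lam m * rr lam (m-2)" using rr_rec[OF lam, of m] 4 by simp
    also have "\<dots> = A2D (real m) lam / Dn lam
         + real m * (real m - 1) * (real m + lam) / ((real m - 2 + lam) * (real m - 2 + 2*lam) * (real m - 1 + 2*lam)) * (Rp (real m - 2) lam / Dn lam)"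
      unfolding a2 IH rho_formula[OF lam 4] ..
    also have "\<dots> = Rp (real m) lam / Dn lam" by (rule Rp_step[OF nz, symmetric])
    finally show ?thesis .
  qed
qed

lemma Fs_closed:
  assumes lam: "lam > -1/2"
  shows "Fs lam m = (Gp (real m) lam - Gp (if even m then 0 else -1) lam) / Dn lam"
proof (induction m rule: less_induct)
  case (less m)
  have D: "Dn lam > 0" by (rule Dn_pos[OF lam])
  consider "m = 0" | "m = 1" | "m \<ge> 2" by linarith
  then show ?case
  proof cases
    case 1 then show ?thesis by (simp add: Fs_def Cset_0 M2_def)
  next
    case 2
    have "Fs lam 1 = (aa lam 1)\<^sup>2" by (simp add: Fs_def Cset_1 M2_diag)
    also have "\<dots> = 4*(1+lam)^2" using aa_closed[OF lam, of 1] Aq_1[OF lam] by (simp add: power2_eq_square algebra_simps)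
    finally show ?thesis using 2 D Gp_1[of lam] by (simp add: eq_divide_eq)
  next
    case 3
    have IH: "Fs lam (m-2) = (Gp (real m - 2) lam - Gp (if even m then 0 else -1) lam) / Dn lam"
      using less.IH[of "m-2"] 3 by (simp add: of_nat_diff)
    have a2: "(aa lam m)\<^sup>2 = A2D (real m) lam / Dn lam"
      using aa_closed[OF lam, of m] Aq_sq[OF lam, of "real m"] D by (simp add: eq_divide_eq)
    have "Fs lam m = Fs lam (m-2) + 2 * rr lam m - (aa lam m)\<^sup>2" by (rule Fs_rec[OF lam 3])
    also have "\<dots> = (Gp (real m - 2) lam - Gp (if even m then 0 else -1) lam + 2 * Rp (real m) lam - A2D (real m) lam) / Dn lam"
      unfolding IH a2 rr_closed[OF lam] using D by (simp add: divide_simps)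
    also have "\<dots> = (Gp (real m) lam - Gp (if even m then 0 else -1) lam) / Dn lam"
      using Gp_step[of "real m" lam] by simp
    finally show ?thesis .
  qed
qed

lemma Tr_closed:
  assumes lam: "lam > -1/2"
  shows "Tr lam (2*j) = Tp (real (2*j)) lam / (2*lam+1)"
proof (induction j)
  case 0 then show ?case by (simp add: Tr_def Cset_0 aa_0 Tp_0)
next
  case (Suc j)
  have m: "2 * Suc j \<ge> 2" by simp
  have l2: "2*lam+1 \<noteq> 0" using lam by simp
  have "Tr lam (2 * Suc j) = Tr lam (2*j) + aa lam (2 * Suc j)" using Tr_rec[OF m] by simp
  also have "\<dots> = Tp (real (2*j)) lam / (2*lam+1) + Aq (real (2 * Suc j)) lam"
    using Suc aa_closed[OF lam] by simp
  also have "\<dots> = (Tp (real (2*j)) lam + 2*real (2 * Suc j)*(real (2 * Suc j)+lam)*(real (2 * Suc j)+2*lam)) / (2*lam+1)"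
    by (simp add: Aq_def add_divide_distrib)
  also have "Tp (real (2*j)) lam + 2*real (2 * Suc j)*(real (2 * Suc j)+lam)*(real (2 * Suc j)+2*lam) = Tp (real (2 * Suc j)) lam"
  proof -
    have "real (2*j) = real (2 * Suc j) - 2" by simp
    then show ?thesis using Tp_step[of "real (2 * Suc j)" lam] by simp
  qed
  finally show ?case .
qed


definition U2D :: "real \<Rightarrow> real \<Rightarrow> real" where
  "U2D n l = (1/4)*n^2*(n+2*l)^2*(n+2*l+2)^2*(n+2)*(n+2*l+3)*(2*l+3)"

definition Qe :: "real \<Rightarrow> real \<Rightarrow> real" where
  "Qe X Y = 1320*Y + 4484*Y^2 + 3184*Y^3 + 888*Y^4 + 104*Y^5 + 4*Y^6 + 4314*X*Y + (28507/3)*X*Y^2 + (16268/3)*X*Y^3 + 1246*X*Y^4 + (358/3)*X*Y^5 + (11/3)*X*Y^6 + (14710/3)*X^2*Y + (24095/3)*X^2*Y^2 + (11002/3)*X^2*Y^3 + 666*X^2*Y^4 + 48*X^2*Y^5 + 1*X^2*Y^6 + (5479/2)*X^3*Y + (42209/12)*X^3*Y^2 + (3781/3)*X^3*Y^3 + (341/2)*X^3*Y^4 + (49/6)*X^3*Y^5 + (1/12)*X^3*Y^6 + (2530/3)*X^4*Y + (2597/3)*X^4*Y^2 + (1397/6)*X^4*Y^3 + 21*X^4*Y^4 + (1/2)*X^4*Y^5 + 146*X^5*Y + 120*X^5*Y^2 + 22*X^5*Y^3 + 1*X^5*Y^4 + (40/3)*X^6*Y + (26/3)*X^6*Y^2 +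 (5/6)*X^6*Y^3 + (1/2)*X^7*Y + (1/4)*X^7*Y^2"

definition Qo :: "real \<Rightarrow> real \<Rightarrow> real" where
  "Qo X Y = 57600 + 96360*Y + 64660*Y^2 + 22268*Y^3 + 4134*Y^4 + 388*Y^5 + 14*Y^6 + 104640*X + 156162*X*Y + (274747/3)*X*Y^2 + (80777/3)*X*Y^3 + (8283/2)*X*Y^4 + (925/3)*X*Y^5 + (49/6)*X*Y^6 + 80944*X^2 + (320944/3)*X^2*Y + (162044/3)*X^2*Y^2 + (39703/3)*X^2*Y^3 + 1623*X^2*Y^4 + (179/2)*X^2*Y^5 + (3/2)*X^2*Y^6 + 34564*X^3 + (80283/2)*X^3*Y + (205049/12)*X^3*Y^2 + (10099/3)*X^3*Y^3 + (619/2)*X^3*Y^4 + (67/6)*X^3*Y^5 + (1/12)*X^3*Y^6 + 8800*X^4 + (26710/3)*X^4*Y + (9287/3)*X^4*Y^2 + (2777/6)*X^4*Y^3 + (57/2)*X^4*Y^4 + (1/2)*X^4*Y^5 + 1336*X^5 + 1166*X^5*Y + 314*X^5*Y^2 + 32*X^5*Y^3 + 1*X^5*Y^4 + 112*X^6 + (250/3)*X^6*Y + (47/3)*X^6*Y^2 + (5/6)*X^6*Y^3 + 4*X^7 + (5/2)*X^7*Y + (1/4)*X^7*Y^2"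

definition Ql :: "real \<Rightarrow> real \<Rightarrow> real" where
  "Ql X Y = 12960 + 27192*Y + 20410*Y^2 + 7853*Y^3 + 1731*Y^4 + 211*Y^5 + 11*Y^6 + 22032*X + 41118*X*Y + (160435/6)*X*Y^2 + (106087/12)*X*Y^3 + (6647/4)*X*Y^4 + (2033/12)*X*Y^5 + (85/12)*X*Y^6 + 15858*X^2 + (77468/3)*X^2*Y + (42610/3)*X^2*Y^2 + (47327/12)*X^2*Y^3 + 617*X^2*Y^4 + (201/4)*X^2*Y^5 + (3/2)*X^2*Y^6 + 6264*X^3 + 8699*X^3*Y + (93953/24)*X^3*Y^2 + (42419/48)*X^3*Y^3 + (1767/16)*X^3*Y^4 + (313/48)*X^3*Y^5 + (5/48)*X^3*Y^6 + (2933/2)*X^4 + (20273/12)*X^4*Y + (14165/24)*X^4*Y^2 + (4943/48)*X^4*Y^3 + (19/2)*X^4*Y^4 + (5/16)*X^4*Y^5 + (407/2)*X^5 + (751/4)*X^5*Y + (369/8)*X^5*Y^2 + (91/16)*X^5*Y^3 + (5/16)*X^5*Y^4 + (31/2)*X^6 + (131/12)*X^6*Y + (35/24)*X^6*Y^2 + (5/48)*X^6*Y^3 + (1/2)*X^7 + (1/4)*X^7*Y"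

lemma Qe_eq: "U2D n l - Gp n l = Qe (n-4) (2*l+1)"
  unfolding U2D_def Gp_def Qe_def by algebra

lemma Gm1: "Gp (-1) l = -45/4 - 69/2*l + 18*l^2 + 132*l^3 + 108*l^4 + 24*l^5"
  unfolding Gp_def by (simp add: power_minus_odd)

lemma Qo_eq: "U2D n l - (Gp (n-1) l - Gp (-1) l) = Qo (n-4) (2*l+1)"
  unfolding Gm1 unfolding U2D_def Gp_def Qo_def by algebra

lemma Ql_eq: "Gp n l - (n+2)*(n+2*l)*(n+l+1/2)^2*Tp n l*(2*l+3) = Ql (n-4) (2*l+1)"
  unfolding Gp_def Tp_def Ql_def by algebra

lemma Qe_nonneg: "X \<ge> 0 \<Longrightarrow> Y \<ge> 0 \<Longrightarrow> Qe X Y \<ge> 0"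
  unfolding Qe_def by (intro add_nonneg_nonneg mult_nonneg_nonneg zero_le_power; simp)

lemma Qo_nonneg: "X \<ge> 0 \<Longrightarrow> Y \<ge> 0 \<Longrightarrow> Qo X Y \<ge> 0"
  unfolding Qo_def by (intro add_nonneg_nonneg mult_nonneg_nonneg zero_le_power; simp)

lemma Ql_nonneg: "X \<ge> 0 \<Longrightarrow> Y \<ge> 0 \<Longrightarrow> Ql X Y \<ge> 0"
  unfolding Ql_def by (intro add_nonneg_nonneg mult_nonneg_nonneg zero_le_power; simp)


lemma pderiv_expand:
  "pderiv (\<Sum>j\<in>A. smult (x j) (gp lam j)) = (\<Sum>j\<in>A. smult (x j) (DD lam j))"
  by (induction A rule: infinite_finite_induct) (auto simp: pderiv_add pderiv_smult DD_def)

lemma expand_deriv: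
  assumes lam: "lam > -1/2"
  shows "II lam ((\<Sum>j\<in>A. smult (x j) (DD lam j)) * (\<Sum>j\<in>A. smult (y j) (DD lam j)))
         = (\<Sum>i\<in>A. \<Sum>j\<in>A. x i * y j * HH lam i j)"
proof -
  have "(\<Sum>j\<in>A. smult (x j) (DD lam j)) * (\<Sum>j\<in>A. smult (y j) (DD lam j))
        = (\<Sum>i\<in>A. \<Sum>j\<in>A. smult (x i * y j) (DD lam i * DD lam j))"
    by (simp add: sum_product mult_smult_left mult_smult_right mult_ac)
  then show ?thesis by (simp add: II_sum[OF lam] II_smult HH_def)
qed

lemma sqrt_bound:
  fixes Q F A :: real
  assumes "Q\<^sup>2 \<le> F * A\<^sup>2" "A \<ge> 0"
  shows "Q \<le> sqrt F * A"
proof -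
  have "\<bar>Q\<bar> = sqrt (Q\<^sup>2)" by simp
  also have "\<dots> \<le> sqrt (F * A\<^sup>2)" using assms(1) by (rule real_sqrt_le_mono)
  also have "\<dots> = sqrt F * A" using assms(2) by (simp add: real_sqrt_mult)
  finally show ?thesis by simp
qed

lemma block_bound:
  assumes lam: "lam > -1/2" and fin: "finite S"
  shows "(\<Sum>k\<in>S. \<Sum>m\<in>S. x k * x m * HH lam k m)
         \<le> sqrt (\<Sum>k\<in>S. \<Sum>m\<in>S. M2 lam k m) * (\<Sum>k\<in>S. x k * x k * NN lam k)"
proof -
  define sN where "sN = (\<lambda>k. sqrt (NN lam k))"
  have sNp: "sN k > 0" for k using NN_pos[OF lam, of k] by (simp add: sN_def)
  have sN2: "sN k * sN k = NN lam k" for k using NN_pos[OF lam, of k] by (simp add: sN_def)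
  define a where "a = (\<lambda>i. HH lam (fst i) (snd i) / (sN (fst i) * sN (snd i)))"
  define b where "b = (\<lambda>i. sN (fst i) * sN (snd i) * (x (fst i) * x (snd i)))"
  have e1: "(\<Sum>k\<in>S. \<Sum>m\<in>S. x k * x m * HH lam k m) = (\<Sum>i\<in>S\<times>S. a i * b i)"
    unfolding sum.cartesian_product
  proof (intro sum.cong refl)
    fix i assume "i \<in> S \<times> S"
    obtain k m where i: "i = (k, m)" by (cases i)
    have "sN k * sN m \<noteq> 0" using sNp[of k] sNp[of m] by simp
    then show "(case i of (k, m) \<Rightarrow> x k * x m * HH lam k m) = a i * b i"
      by (simp add: i a_def b_def)
  qed
  have e2: "(\<Sum>i\<in>S\<times>S. (a i)\<^sup>2) = (\<Sum>k\<in>S. \<Sum>m\<in>S. M2 lam k m)"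
    unfolding sum.cartesian_product
  proof (intro sum.cong refl)
    fix i assume "i \<in> S \<times> S"
    obtain k m where i: "i = (k, m)" by (cases i)
    have "(a i)\<^sup>2 = (HH lam k m)\<^sup>2 / ((sN k * sN k) * (sN m * sN m))"
      by (simp add: i a_def power_divide power2_eq_square mult_ac)
    then show "(a i)\<^sup>2 = (case i of (k, m) \<Rightarrow> M2 lam k m)"
      by (simp add: i sN2 M2_def)
  qed
  have e3: "(\<Sum>i\<in>S\<times>S. (b i)\<^sup>2) = (\<Sum>k\<in>S. x k * x k * NN lam k)\<^sup>2"
  proof -
    have "(\<Sum>i\<in>S\<times>S. (b i)\<^sup>2) = (\<Sum>k\<in>S. \<Sum>m\<in>S. (x k * x k * NN lam k) * (x m * x m * NN lam m))"
      unfolding sum.cartesian_product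
    proof (intro sum.cong refl)
      fix i assume "i \<in> S \<times> S"
      obtain k m where i: "i = (k, m)" by (cases i)
      have "(b i)\<^sup>2 = (x k * x k * (sN k * sN k)) * (x m * x m * (sN m * sN m))"
        by (simp add: i b_def power2_eq_square mult_ac)
      then show "(b i)\<^sup>2 = (case i of (k, m) \<Rightarrow> (x k * x k * NN lam k) * (x m * x m * NN lam m))"
        by (simp add: i sN2)
    qed
    also have "\<dots> = (\<Sum>k\<in>S. x k * x k * NN lam k)\<^sup>2"
      by (simp add: power2_eq_square sum_product)
    finally show ?thesis .
  qed
  have "(\<Sum>k\<in>S. \<Sum>m\<in>S. x k * x m * HH lam k m)\<^sup>2
        \<le> (\<Sum>k\<in>S. \<Sum>m\<in>S. M2 lam k m) * (\<Sum>k\<in>S. x k * x k * NN lam k)\<^sup>2"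
    unfolding e1 e2[symmetric] e3[symmetric] by (rule Cauchy_Schwarz_ineq_sum)
  moreover have "(\<Sum>k\<in>S. x k * x k * NN lam k) \<ge> 0"
    using NN_pos[OF lam] by (intro sum_nonneg) (simp add: less_imp_le)
  ultimately show ?thesis by (rule sqrt_bound)
qed


lemma Cset_split:
  assumes n: "n \<ge> 1"
  shows "{..n} = Cset n \<union> Cset (n-1)" "Cset n \<inter> Cset (n-1) = {}"
proof -
  show "{..n} = Cset n \<union> Cset (n-1)"
    using n unfolding Cset_def by (auto; presburger)
  show "Cset n \<inter> Cset (n-1) = {}"
    using n unfolding Cset_def by (auto; presburger)
qed

lemma Cset_parity: "k \<in> Cset m \<Longrightarrow> even k = even m"
  unfolding Cset_def by auto

lemma double_sum_split:
  assumes "finite A" "finite B" "A \<inter> B = {}"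
  shows "(\<Sum>i\<in>A \<union> B. \<Sum>j\<in>A \<union> B. f i j)
       = (\<Sum>i\<in>A. \<Sum>j\<in>A. f i j) + (\<Sum>i\<in>A. \<Sum>j\<in>B. f i j) + (\<Sum>i\<in>B. \<Sum>j\<in>A. f i j) + (\<Sum>i\<in>B. \<Sum>j\<in>B. f i j)"
  using assms by (simp add: sum.union_disjoint sum.distrib add_ac)

lemma degree_sum_le_n:
  assumes "\<And>i. i \<in> A \<Longrightarrow> degree (f i) \<le> n"
  shows "degree (\<Sum>i\<in>A. f i) \<le> n"
  using assms
proof (induction A rule: infinite_finite_induct)
  case (insert x F)
  then show ?case by (simp add: degree_add_le)
qed auto

lemma Fs_even_le:
  assumes lam: "lam > -1/2" and n: "even n" "n \<ge> 4"
  shows "Fs lam n \<le> U2D (real n) lam / Dn lam"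
proof -
  have "Fs lam n = Gp (real n) lam / Dn lam" using Fs_closed[OF lam, of n] n by (simp add: Gp_0)
  moreover have "Gp (real n) lam \<le> U2D (real n) lam"
    using Qe_eq[of "real n" lam] Qe_nonneg[of "real n - 4" "2*lam+1"] n lam by simp
  ultimately show ?thesis using Dn_pos[OF lam] by (simp add: divide_right_mono)
qed

lemma Fs_odd_le:
  assumes lam: "lam > -1/2" and n: "even n" "n \<ge> 4"
  shows "Fs lam (n-1) \<le> U2D (real n) lam / Dn lam"
proof -
  have "odd (n-1)" using n by simp
  then have "Fs lam (n-1) = (Gp (real n - 1) lam - Gp (-1) lam) / Dn lam"
    using Fs_closed[OF lam, of "n-1"] n by (simp add: of_nat_diff)
  moreover have "Gp (real n - 1) lam - Gp (-1) lam \<le> U2D (real n) lam"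
    using Qo_eq[of "real n" lam] Qo_nonneg[of "real n - 4" "2*lam+1"] n lam by simp
  ultimately show ?thesis using Dn_pos[OF lam] by (simp add: divide_right_mono)
qed

lemma upper_quad:
  assumes lam: "lam > -1/2" and n: "even n" "n \<ge> 4" and dp: "degree p \<le> n"
  shows "II lam (pderiv p * pderiv p) \<le> sqrt (U2D (real n) lam / Dn lam) * II lam (p * p)"
proof -
  let ?E = "Cset n" and ?O = "Cset (n-1)"
  let ?B = "sqrt (U2D (real n) lam / Dn lam)"
  obtain x where x: "p = (\<Sum>j\<le>n. smult (x j) (gp lam j))" using gp_span[OF dp] by blast
  have sp: "{..n} = ?E \<union> ?O" "?E \<inter> ?O = {}" using Cset_split[of n] n by auto
  have pp: "II lam (p * p) = (\<Sum>k\<in>?E. x k * x k * NN lam k) + (\<Sum>k\<in>?O. x k * x k * NN lam k)"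
  proof -
    have "II lam (p * p) = (\<Sum>k\<le>n. x k * x k * NN lam k)"
      by (subst (1 2) x) (rule expand_inner[OF lam], simp)
    then show ?thesis unfolding sp(1) using sp(2) by (simp add: sum.union_disjoint)
  qed
  have dd: "II lam (pderiv p * pderiv p) = (\<Sum>i\<le>n. \<Sum>j\<le>n. x i * x j * HH lam i j)"
    unfolding x pderiv_expand by (rule expand_deriv[OF lam])
  have cross1: "(\<Sum>i\<in>?E. \<Sum>j\<in>?O. x i * x j * HH lam i j) = 0"
  proof (intro sum.neutral ballI)
    fix i j assume "i \<in> ?E" "j \<in> ?O"
    then have "even i" "odd j" using Cset_parity n by fastforce+
    then have "odd (i + j)" by simp
    then show "x i * x j * HH lam i j = 0" using HH_parity[OF lam] by simp
  qed
  have cross2: "(\<Sum>i\<in>?O. \<Sum>j\<in>?E. x i * x j * HH lam i j) = 0"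
  proof (intro sum.neutral ballI)
    fix i j assume "i \<in> ?O" "j \<in> ?E"
    then have "odd i" "even j" using Cset_parity n by fastforce+
    then have "odd (i + j)" by simp
    then show "x i * x j * HH lam i j = 0" using HH_parity[OF lam] by simp
  qed
  have "II lam (pderiv p * pderiv p) = (\<Sum>i\<in>?E. \<Sum>j\<in>?E. x i * x j * HH lam i j) + (\<Sum>i\<in>?O. \<Sum>j\<in>?O. x i * x j * HH lam i j)"
    unfolding dd sp(1) double_sum_split[OF Cset_fin Cset_fin sp(2)] cross1 cross2 by simp
  also have "\<dots> \<le> sqrt (Fs lam n) * (\<Sum>k\<in>?E. x k * x k * NN lam k) + sqrt (Fs lam (n-1)) * (\<Sum>k\<in>?O. x k * x k * NN lam k)"
    unfolding Fs_def by (intro add_mono block_bound[OF lam]) auto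
  also have "\<dots> \<le> ?B * (\<Sum>k\<in>?E. x k * x k * NN lam k) + ?B * (\<Sum>k\<in>?O. x k * x k * NN lam k)"
  proof (intro add_mono mult_right_mono)
    show "sqrt (Fs lam n) \<le> ?B" using Fs_even_le[OF lam n] by simp
    show "sqrt (Fs lam (n-1)) \<le> ?B" using Fs_odd_le[OF lam n] by simp
    show "0 \<le> (\<Sum>k\<in>?E. x k * x k * NN lam k)" "0 \<le> (\<Sum>k\<in>?O. x k * x k * NN lam k)"
      using NN_pos[OF lam] by (auto intro!: sum_nonneg simp: less_imp_le)
  qed
  also have "\<dots> = ?B * II lam (p * p)" unfolding pp by (simp add: algebra_simps)
  finally show ?thesis .
qed

lemma lower_sum:
  assumes lam: "lam > -1/2" and n: "even n" "n \<ge> 4" and C: "C \<ge> 0"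
    and hyp: "\<And>q. degree q \<le> n \<Longrightarrow> II lam (pderiv q * pderiv q) \<le> C * II lam (q * q)"
  shows "Fs lam n \<le> C * Tr lam n"
proof -
  let ?E = "Cset n"
  have row: "(\<Sum>m\<in>?E. M2 lam k m) \<le> C * aa lam k" if k: "k \<in> ?E" for k
  proof -
    define y where "y = (\<lambda>m. HH lam k m / NN lam m)"
    define q where "q = (\<Sum>m\<in>?E. smult (y m) (gp lam m))"
    define Z where "Z = (\<Sum>m\<in>?E. (HH lam k m)\<^sup>2 / NN lam m)"
    have Npos: "\<And>m. NN lam m > 0" by (rule NN_pos[OF lam])
    have dq: "degree q \<le> n" unfolding q_def
      by (rule degree_sum_le_n) (auto simp: Cset_def degree_smult_le order.trans[OF degree_smult_le])
    have qq: "II lam (q * q) = Z"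
    proof -
      have "II lam (q * q) = (\<Sum>m\<in>?E. y m * y m * NN lam m)"
        unfolding q_def by (rule expand_inner[OF lam Cset_fin])
      also have "\<dots> = Z" unfolding Z_def y_def
        by (intro sum.cong refl) (use Npos in \<open>simp add: power2_eq_square field_simps\<close>)
      finally show ?thesis .
    qed
    have dqd: "II lam (DD lam k * pderiv q) = Z"
    proof -
      have "DD lam k * pderiv q = (\<Sum>m\<in>?E. smult (y m) (DD lam k * DD lam m))"
        unfolding q_def pderiv_expand by (simp add: sum_distrib_left mult_smult_right)
      then have "II lam (DD lam k * pderiv q) = (\<Sum>m\<in>?E. y m * HH lam k m)"
        by (simp add: II_sum[OF lam] II_smult HH_def)
      also have "\<dots> = Z" unfolding Z_def y_def
        by (intro sum.cong refl) (simp add: power2_eq_square)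
      finally show ?thesis .
    qed
    have Znn: "Z \<ge> 0" unfolding Z_def using Npos by (intro sum_nonneg) (simp add: less_imp_le)
    have Hkk: "HH lam k k \<ge> 0" unfolding HH_def by (rule II_sq_nonneg[OF lam])
    have "Z\<^sup>2 \<le> HH lam k k * II lam (pderiv q * pderiv q)"
      using II_CS[OF lam, of "DD lam k" "pderiv q"] dqd by (simp add: HH_def)
    also have "\<dots> \<le> HH lam k k * (C * Z)"
      using hyp[OF dq] qq Hkk by (simp add: mult_left_mono)
    finally have Z2: "Z\<^sup>2 \<le> HH lam k k * (C * Z)" .
    have ZC: "Z \<le> C * HH lam k k"
    proof (cases "Z = 0")
      case True then show ?thesis using C Hkk by simp
    next
      case False
      then have "Z > 0" using Znn by simp
      then show ?thesis using Z2 by (simp add: power2_eq_square mult_ac)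
    qed
    have "(\<Sum>m\<in>?E. M2 lam k m) = Z / NN lam k"
      unfolding Z_def M2_def sum_divide_distrib
      by (intro sum.cong refl) (simp add: field_simps)
    also have "\<dots> \<le> C * HH lam k k / NN lam k" using ZC Npos[of k] by (simp add: divide_right_mono)
    also have "\<dots> = C * aa lam k" by (simp add: aa_def)
    finally show ?thesis .
  qed
  have "Fs lam n = (\<Sum>k\<in>?E. \<Sum>m\<in>?E. M2 lam k m)" by (simp add: Fs_def)
  also have "\<dots> \<le> (\<Sum>k\<in>?E. C * aa lam k)" by (intro sum_mono row)
  also have "\<dots> = C * Tr lam n" by (simp add: Tr_def sum_distrib_left)
  finally show ?thesis .
qed


lemma Tp_fact: "Tp x l = x*(x+2)*(x+2*l)*(x+2*l+2)/4"
  unfolding Tp_def by (simp add: field_simps; algebra)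

lemma rat_B:
  fixes x l :: real
  assumes "2*l+1 \<noteq> 0" "2*l+3 \<noteq> 0" "2*l+5 \<noteq> 0"
  shows "1/4*x^2*(x+2*l)^2*(x+2*l+2)^2*(x+2)*(x+2*l+3)*(2*l+3) / ((2*l+1)^2*(2*l+3)*(2*l+5))
       = (x*(x+2*l)*(x+2*l+2)/(2*(2*l+1)))^2 * ((x+2)*(x+2*l+3)/(2*l+5))"
  using assms by (simp add: divide_simps power2_eq_square, (algebra)?)

lemma Bb_eq:
  assumes lam: "lam > -1/2" and n: "n \<ge> (4::nat)"
  shows "sqrt (U2D (real n) lam / Dn lam)
       = real n * (real n + 2*lam) * (real n + 2*lam + 2) * sqrt ((real n + 2) * (real n + 2*lam + 3))
           / (2 * (2*lam + 1) * sqrt (2*lam + 5))"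
proof -
  define a where "a = real n * (real n + 2*lam) * (real n + 2*lam + 2) / (2 * (2*lam + 1))"
  define b where "b = (real n + 2) * (real n + 2*lam + 3) / (2*lam + 5)"
  have a0: "a \<ge> 0" unfolding a_def using lam n by (intro divide_nonneg_pos mult_nonneg_nonneg) auto
  have nz: "2*lam+1 \<noteq> 0" "2*lam+3 \<noteq> 0" "2*lam+5 \<noteq> 0" using lam by auto
  have "U2D (real n) lam / Dn lam = a\<^sup>2 * b"
    unfolding U2D_def Dn_def a_def b_def by (rule rat_B[OF nz])
  then have "sqrt (U2D (real n) lam / Dn lam) = a * sqrt b"
    using a0 by (simp add: real_sqrt_mult)
  also have "\<dots> = real n * (real n + 2*lam) * (real n + 2*lam + 2) * sqrt ((real n + 2) * (real n + 2*lam + 3))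
           / (2 * (2*lam + 1) * sqrt (2*lam + 5))"
    unfolding a_def b_def by (simp add: real_sqrt_divide)
  finally show ?thesis .
qed

theorem theorem4p2:
  fixes n :: nat and lam :: real
  assumes "even n" and "n \<ge> 4" and "lam > -1/2"
  shows "(real n + 2) * (real n + 2*lam) * (real n + lam + 1/2)\<^sup>2 / ((2*lam + 1) * (2*lam + 5))
           \<le> (markov_const n lam)\<^sup>2 \<and>
         (markov_const n lam)\<^sup>2 \<le>
           real n * (real n + 2*lam) * (real n + 2*lam + 2) * sqrt ((real n + 2) * (real n + 2*lam + 3))
           / (2 * (2*lam + 1) * sqrt (2*lam + 5))"
proof -
  note lam = assms(3)
  note nn = assms(1) assms(2)
  define S where "S = {wnorm lam (poly (pderiv p)) / wnorm lam (poly p) | p :: real poly. degree p \<le> n \<and> p \<noteq> 0}"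
  define c where "c = markov_const n lam"
  have cS: "c = Sup S" by (simp add: c_def S_def markov_const_def)
  define Bb where "Bb = sqrt (U2D (real n) lam / Dn lam)"
  have Bb0: "Bb \<ge> 0"
  proof -
    have "U2D (real n) lam \<ge> 0" unfolding U2D_def using lam nn by (intro mult_nonneg_nonneg) auto
    then show ?thesis using Dn_pos[OF lam] by (simp add: Bb_def)
  qed
  have wn: "wnorm lam (poly p) = sqrt (II lam (p * p))" for p
    using wnorm_poly[OF lam, of p] by (simp add: power2_eq_square)
  have pos: "II lam (p * p) > 0" if "p \<noteq> 0" for p
    using II_sq_nonneg[OF lam, of p] definite[OF lam, of p] that by force
  have ratio_le: "r \<le> sqrt Bb" if "r \<in> S" for r
  proof -
    from that obtain p where p: "r = wnorm lam (poly (pderiv p)) / wnorm lam (poly p)" "degree p \<le> n" "p \<noteq> 0"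
      by (auto simp: S_def)
    have up: "II lam (pderiv p * pderiv p) \<le> Bb * II lam (p * p)"
      using upper_quad[OF lam nn p(2)] by (simp add: Bb_def)
    have P: "II lam (p * p) > 0" by (rule pos[OF p(3)])
    have "r = sqrt (II lam (pderiv p * pderiv p) / II lam (p * p))" by (simp add: p(1) wn real_sqrt_divide)
    also have "\<dots> \<le> sqrt Bb" using up P by (intro real_sqrt_le_mono) (simp add: divide_le_eq)
    finally show ?thesis .
  qed
  have one_in: "0 \<in> S"
  proof -
    have "\<exists>p::real poly. 0 = wnorm lam (poly (pderiv p)) / wnorm lam (poly p) \<and> degree p \<le> n \<and> p \<noteq> 0"
      by (rule exI[of _ 1]) (simp add: wn)
    then show ?thesis by (simp add: S_def)
  qed
  have bdd: "bdd_above S" using ratio_le by (intro bdd_aboveI) blast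
  have c0: "c \<ge> 0" unfolding cS using cSup_upper[OF one_in bdd] .
  have cle: "c \<le> sqrt Bb" unfolding cS using one_in ratio_le by (intro cSup_least) auto
  have upper: "c\<^sup>2 \<le> Bb"
  proof -
    have "c\<^sup>2 \<le> (sqrt Bb)\<^sup>2" using c0 cle by (intro power_mono) auto
    then show ?thesis using Bb0 by simp
  qed
  have hyp: "II lam (pderiv q * pderiv q) \<le> c\<^sup>2 * II lam (q * q)" if dq: "degree q \<le> n" for q
  proof (cases "q = 0")
    case True then show ?thesis by simp
  next
    case False
    have P: "II lam (q * q) > 0" by (rule pos[OF False])
    have "wnorm lam (poly (pderiv q)) / wnorm lam (poly q) \<in> S" unfolding S_def using dq False by blast
    then have "wnorm lam (poly (pderiv q)) / wnorm lam (poly q) \<le> c"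
      unfolding cS by (rule cSup_upper[OF _ bdd])
    then have "sqrt (II lam (pderiv q * pderiv q)) / sqrt (II lam (q * q)) \<le> c" by (simp add: wn)
    then have "sqrt (II lam (pderiv q * pderiv q)) \<le> c * sqrt (II lam (q * q))"
      using P by (simp add: divide_le_eq)
    then have "(sqrt (II lam (pderiv q * pderiv q)))\<^sup>2 \<le> (c * sqrt (II lam (q * q)))\<^sup>2"
      using II_sq_nonneg[OF lam, of "pderiv q"] by (intro power_mono) auto
    then show ?thesis using P II_sq_nonneg[OF lam, of "pderiv q"] by (simp add: power_mult_distrib)
  qed
  have low: "Fs lam n \<le> c\<^sup>2 * Tr lam n" by (rule lower_sum[OF lam nn _ hyp]) simp
  obtain j where j: "n = 2 * j" using nn(1) by blast
  have Tr: "Tr lam n = Tp (real n) lam / (2*lam+1)" using Tr_closed[OF lam, of j] j by simp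
  have Trpos: "Tr lam n > 0"
  proof -
    have "Tp (real n) lam > 0" unfolding Tp_fact using lam nn by (intro divide_pos_pos mult_pos_pos) auto
    then show ?thesis unfolding Tr using lam by simp
  qed
  have Fs: "Fs lam n = Gp (real n) lam / Dn lam" using Fs_closed[OF lam, of n] nn by (simp add: Gp_0)
  define L where "L = (real n + 2) * (real n + 2*lam) * (real n + lam + 1/2)\<^sup>2 / ((2*lam + 1) * (2*lam + 5))"
  have LTr: "L * Tr lam n = (real n + 2) * (real n + 2*lam) * (real n + lam + 1/2)\<^sup>2 * Tp (real n) lam * (2*lam+3) / Dn lam"
  proof -
    have nz: "2*lam+1 \<noteq> 0" "2*lam+3 \<noteq> 0" "2*lam+5 \<noteq> 0" using lam by auto
    show ?thesis unfolding L_def Tr Dn_def using nz by (simp add: divide_simps; algebra)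
  qed
  have "L * Tr lam n \<le> Fs lam n"
  proof -
    have "(real n + 2) * (real n + 2*lam) * (real n + lam + 1/2)\<^sup>2 * Tp (real n) lam * (2*lam+3) \<le> Gp (real n) lam"
      using Ql_eq[of "real n" lam] Ql_nonneg[of "real n - 4" "2*lam+1"] nn lam by simp
    then show ?thesis unfolding LTr Fs using Dn_pos[OF lam] by (simp add: divide_right_mono)
  qed
  then have "L * Tr lam n \<le> c\<^sup>2 * Tr lam n" using low by linarith
  then have lower: "L \<le> c\<^sup>2" using Trpos by simp
  show ?thesis
    using lower upper Bb_eq[OF lam nn(2)] unfolding L_def c_def Bb_def by simp
qed

end
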